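(* Let $G$ be a finite simple (unweighted) graph with $n\ge1$ vertices. Then for every $k\ge1$, \[[x^k]\tau_G=(-1)^{n+k}\sum_{m=1}^{k}\binom{n-m}{k-m}[x^m]\chi_G,\] where $\chi_G$ is the chromatic polynomial of $G$.
   Context: $X_G=\sum_\kappa\prod_{v}x_{\kappa(v)}$ over proper colourings $\kappa:V(G)\to\{1,2,\dots\}$. $P_\lambda$ is the disjoint union of paths $P_{\lambda_1},\dots,P_{\lambda_{\ell(\lambda)}}$ ($P_n$ the path on $n$ vertices), and $\{X_{P_\lambda}\}$ is a basis of the algebra of symmetric functions over $\mathbb{Q}$. The tree polynomial is $\tau_G(x)=\sum_\lambda a_\lambda x^{\ell(\lambda)}$ where $X_G=\sum_\lambda a_\lambda X_{P_\lambda}$. $[x^k]q$ denotes the coefficient of $x^k$ in a polynomial $q$. *)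

theory Defs
  imports "HOL-Library.FuncSet" "HOL-Computational_Algebra.Polynomial"
begin

text \<open>A finite simple graph is given by a finite vertex set V and a symmetric,
irreflexive adjacency relation E (only its restriction to V matters).\<close>

definition simple_graph :: "'a set \<Rightarrow> ('a \<Rightarrow> 'a \<Rightarrow> bool) \<Rightarrow> bool" where
  "simple_graph V E \<longleftrightarrow> finite V \<and> (\<forall>u v. E u v \<longrightarrow> E v u) \<and> (\<forall>v. \<not> E v v)"

definition proper_colouring :: "'a set \<Rightarrow> ('a \<Rightarrow> 'a \<Rightarrow> bool) \<Rightarrow> ('a \<Rightarrow> nat) \<Rightarrow> bool" where
  "proper_colouring V E \<kappa> \<longleftrightarrow> (\<forall>u\<in>V. \<forall>v\<in>V. E u v \<longrightarrow> \<kappa> u \<noteq> \<kappa> v)"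

text \<open>Coefficient of the monomial \<open>\<Prod>i x_i^(\<alpha> i)\<close> in the chromatic symmetric function
X_G: the number of proper colourings \<open>\<kappa> : V \<rightarrow> {1,2,...}\<close> in which colour i is used
exactly \<open>\<alpha> i\<close> times.  (Variables are indexed by positive naturals; \<open>\<alpha> 0\<close> is the
exponent of a non-existent variable, so the coefficient vanishes unless \<open>\<alpha> 0 = 0\<close>.)
A symmetric function is determined by these coefficients.\<close>

definition csf_coeff :: "'a set \<Rightarrow> ('a \<Rightarrow> 'a \<Rightarrow> bool) \<Rightarrow> (nat \<Rightarrow> nat) \<Rightarrow> nat" where
  "csf_coeff V E \<alpha> = card {\<kappa>. \<kappa> \<in> V \<rightarrow>\<^sub>E {1..} \<and> proper_colouring V E \<kappa> \<and>
                               (\<forall>i. card {v\<in>V. \<kappa> v = i} = \<alpha> i)}"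

definition partitions :: "nat \<Rightarrow> nat list set" where
  "partitions n = {lam. sorted_wrt (\<ge>) lam \<and> 0 \<notin> set lam \<and> sum_list lam = n}"

text \<open>The graph P_lam: disjoint union of paths P_{lam_1}, ..., P_{lam_l}.
Vertex (j,i) is the i-th vertex of the j-th path.\<close>

definition path_vertices :: "nat list \<Rightarrow> (nat \<times> nat) set" where
  "path_vertices lam = {(j, i). j < length lam \<and> i < lam ! j}"

definition path_edges :: "nat list \<Rightarrow> (nat \<times> nat) \<Rightarrow> (nat \<times> nat) \<Rightarrow> bool" where
  "path_edges lam u v \<longleftrightarrow> fst u = fst v \<and> (snd v = snd u + 1 \<or> snd u = snd v + 1)"

text \<open>Coefficients a_lam of X_G in the basis {X_{P_lam}} (only partitions of |V| can occur,
by homogeneity), and the tree polynomial \<open>\<tau>_G(x) = \<Sum>_lam a_lam x^{\<ell>(lam)}\<close>.\<close>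

definition tree_coeffs :: "'a set \<Rightarrow> ('a \<Rightarrow> 'a \<Rightarrow> bool) \<Rightarrow> nat list \<Rightarrow> rat" where
  "tree_coeffs V E = (THE a. (\<forall>lam. lam \<notin> partitions (card V) \<longrightarrow> a lam = 0) \<and>
      (\<forall>\<alpha>. of_nat (csf_coeff V E \<alpha>) =
            (\<Sum>lam\<in>partitions (card V). a lam * of_nat (csf_coeff (path_vertices lam) (path_edges lam) \<alpha>))))"

definition tree_poly :: "'a set \<Rightarrow> ('a \<Rightarrow> 'a \<Rightarrow> bool) \<Rightarrow> rat poly" where
  "tree_poly V E = (\<Sum>lam\<in>partitions (card V). monom (tree_coeffs V E lam) (length lam))"

definition chromatic_poly :: "'a set \<Rightarrow> ('a \<Rightarrow> 'a \<Rightarrow> bool) \<Rightarrow> rat poly" where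
  "chromatic_poly V E = (THE p. \<forall>q::nat. poly p (of_nat q) =
      of_nat (card {\<kappa>. \<kappa> \<in> V \<rightarrow>\<^sub>E {1..q} \<and> proper_colouring V E \<kappa>}))"

end

theory Submission
  imports Defs "HOL-Combinatorics.List_Permutation"
begin


definition wcsf :: "'v set \<Rightarrow> ('v \<Rightarrow> 'v \<Rightarrow> bool) \<Rightarrow> ('v \<Rightarrow> nat) \<Rightarrow> (nat \<Rightarrow> nat) \<Rightarrow> nat" where
  "wcsf V E w \<alpha> = card {\<kappa>. \<kappa> \<in> V \<rightarrow>\<^sub>E {1..} \<and> proper_colouring V E \<kappa> \<and>
       (\<forall>i. (\<Sum>v\<in>{v\<in>V. \<kappa> v = i}. w v) = \<alpha> i)}"

lemma csf_coeff_wcsf: "csf_coeff V E \<alpha> = wcsf V E (\<lambda>_. 1) \<alpha>"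
  unfolding csf_coeff_def wcsf_def by simp

lemma wcsf_iso:
  assumes bij: "bij_betw f V V'" and E: "\<forall>u\<in>V. \<forall>v\<in>V. E u v = E' (f u) (f v)"
    and w: "\<forall>v\<in>V. w' (f v) = w v"
  shows "wcsf V E w \<alpha> = wcsf V' E' w' \<alpha>"
proof -
  define g where "g = inv_into V f"
  have fg: "\<And>v'. v' \<in> V' \<Longrightarrow> f (g v') = v'" and gV: "\<And>v'. v' \<in> V' \<Longrightarrow> g v' \<in> V"
    and gf: "\<And>v. v \<in> V \<Longrightarrow> g (f v) = v" and fV: "\<And>v. v \<in> V \<Longrightarrow> f v \<in> V'"
    using bij unfolding g_def
    by (auto simp: bij_betw_def inv_into_into f_inv_into_f inv_into_f_f)
  let ?A = "{\<kappa>. \<kappa> \<in> V \<rightarrow>\<^sub>E {1..} \<and> proper_colouring V E \<kappa> \<and>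
       (\<forall>i. (\<Sum>v\<in>{v\<in>V. \<kappa> v = i}. w v) = \<alpha> i)}"
  let ?B = "{\<kappa>. \<kappa> \<in> V' \<rightarrow>\<^sub>E {1..} \<and> proper_colouring V' E' \<kappa> \<and>
       (\<forall>i. (\<Sum>v\<in>{v\<in>V'. \<kappa> v = i}. w' v) = \<alpha> i)}"
  have sumeq: "(\<Sum>v\<in>{v\<in>V'. restrict (\<kappa> \<circ> g) V' v = i}. w' v) = (\<Sum>v\<in>{v\<in>V. \<kappa> v = i}. w v)" for \<kappa> :: "_ \<Rightarrow> nat" and i
  proof (rule sum.reindex_bij_betw[symmetric, where h=f, THEN trans])
    show "bij_betw f {v \<in> V. \<kappa> v = i} {v \<in> V'. restrict (\<kappa> \<circ> g) V' v = i}"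
    proof -
      have "bij_betw f {v \<in> V. \<kappa> v = i} (f ` {v \<in> V. \<kappa> v = i})"
        by (rule bij_betw_subset[OF bij]) auto
      moreover have "f ` {v \<in> V. \<kappa> v = i} = {v \<in> V'. restrict (\<kappa> \<circ> g) V' v = i}"
      proof (rule set_eqI, rule iffI)
        fix x assume "x \<in> f ` {v \<in> V. \<kappa> v = i}"
        then obtain v where "v \<in> V" "\<kappa> v = i" "x = f v" by blast
        then show "x \<in> {v \<in> V'. restrict (\<kappa> \<circ> g) V' v = i}" by (simp add: fV gf)
      next
        fix x assume "x \<in> {v \<in> V'. restrict (\<kappa> \<circ> g) V' v = i}"
        then have "x \<in> V'" "\<kappa> (g x) = i" by auto
        then show "x \<in> f ` {v \<in> V. \<kappa> v = i}" using gV fg by (metis (mono_tags, lifting) image_eqI mem_Collect_eq)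
      qed
      ultimately show ?thesis by simp
    qed
    show "(\<Sum>x\<in>{v \<in> V. \<kappa> v = i}. w' (f x)) = sum w {v \<in> V. \<kappa> v = i}"
      using w by (auto intro!: sum.cong)
  qed
  have "bij_betw (\<lambda>\<kappa>. restrict (\<kappa> \<circ> g) V') ?A ?B"
  proof (rule bij_betw_byWitness[where f'="\<lambda>\<kappa>. restrict (\<kappa> \<circ> f) V"])
    show "\<forall>a\<in>?A. restrict (restrict (a \<circ> g) V' \<circ> f) V = a"
      by (auto simp: fun_eq_iff fV gf PiE_def extensional_def)
    show "\<forall>a\<in>?B. restrict (restrict (a \<circ> f) V \<circ> g) V' = a"
      by (auto simp: fun_eq_iff gV fg PiE_def extensional_def)
    show "(\<lambda>\<kappa>. restrict (\<kappa> \<circ> g) V') ` ?A \<subseteq> ?B"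
    proof (rule image_subsetI)
      fix \<kappa> assume k: "\<kappa> \<in> ?A"
      have 1: "restrict (\<kappa> \<circ> g) V' \<in> V' \<rightarrow>\<^sub>E {1..}" using k gV by auto
      have 2: "proper_colouring V' E' (restrict (\<kappa> \<circ> g) V')"
        unfolding proper_colouring_def
      proof (intro ballI impI)
        fix x y assume "x \<in> V'" "y \<in> V'" "E' x y"
        then have "E (g x) (g y)" using E gV fg by metis
        then show "restrict (\<kappa> \<circ> g) V' x \<noteq> restrict (\<kappa> \<circ> g) V' y"
          using k \<open>x \<in> V'\<close> \<open>y \<in> V'\<close> gV unfolding proper_colouring_def by auto
      qed
      have 3: "(\<Sum>v\<in>{v\<in>V'. restrict (\<kappa> \<circ> g) V' v = i}. w' v) = \<alpha> i" for i
        using k sumeq by auto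
      show "restrict (\<kappa> \<circ> g) V' \<in> ?B" using 1 2 3 by blast
    qed
    show "(\<lambda>\<kappa>. restrict (\<kappa> \<circ> f) V) ` ?B \<subseteq> ?A"
    proof (rule image_subsetI)
      fix \<kappa> assume k: "\<kappa> \<in> ?B"
      have ext: "restrict (restrict (\<kappa> \<circ> f) V \<circ> g) V' = \<kappa>"
        using k by (auto simp: fun_eq_iff gV fg PiE_def extensional_def)
      have 1: "restrict (\<kappa> \<circ> f) V \<in> V \<rightarrow>\<^sub>E {1..}" using k fV by auto
      have 2: "proper_colouring V E (restrict (\<kappa> \<circ> f) V)"
        using k E fV unfolding proper_colouring_def by auto
      have 3: "(\<Sum>v\<in>{v\<in>V. restrict (\<kappa> \<circ> f) V v = i}. w v) = \<alpha> i" for i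
        using k sumeq[of "restrict (\<kappa> \<circ> f) V" i] ext by auto
      show "restrict (\<kappa> \<circ> f) V \<in> ?A" using 1 2 3 by blast
    qed
  qed
  then show ?thesis unfolding wcsf_def by (rule bij_betw_same_card)
qed


lemma fin_col:
  assumes "finite V" "\<forall>x\<in>V. 0 < w x"
  shows "finite {\<kappa>. \<kappa> \<in> V \<rightarrow>\<^sub>E {1..} \<and> P \<kappa> \<and> (\<forall>i. (\<Sum>v\<in>{v\<in>V. \<kappa> v = i}. w v) = (\<alpha>::nat\<Rightarrow>nat) i)}"
    (is "finite ?S")
proof (cases "?S = {}")
  case False
  then obtain \<kappa>0 where k0: "\<kappa>0 \<in> ?S" by blast
  have "?S \<subseteq> V \<rightarrow>\<^sub>E (\<kappa>0 ` V)"
  proof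
    fix \<kappa> assume k: "\<kappa> \<in> ?S"
    show "\<kappa> \<in> V \<rightarrow>\<^sub>E \<kappa>0 ` V"
    proof (rule PiE_I)
      fix x assume x: "x \<in> V"
      have "0 < w x" using assms x by auto
      also have "w x \<le> (\<Sum>v\<in>{v\<in>V. \<kappa> v = \<kappa> x}. w v)"
        by (rule member_le_sum) (use x assms in auto)
      also have "\<dots> = \<alpha> (\<kappa> x)" using k by auto
      also have "\<dots> = (\<Sum>v\<in>{v\<in>V. \<kappa>0 v = \<kappa> x}. w v)" using k0 by auto
      finally have "{v\<in>V. \<kappa>0 v = \<kappa> x} \<noteq> {}" by (metis less_irrefl sum.empty)
      then obtain y where "y \<in> V" "\<kappa>0 y = \<kappa> x" by blast
      then show "\<kappa> x \<in> \<kappa>0 ` V" by (metis image_eqI)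
    next
      fix x assume "x \<notin> V" then show "\<kappa> x = undefined" using k by auto
    qed
  qed
  moreover have "finite (V \<rightarrow>\<^sub>E (\<kappa>0 ` V))" using assms by (intro finite_PiE) auto
  ultimately show ?thesis by (rule finite_subset)
qed (metis finite.emptyI)

lemma sum_upd_plus:
  assumes "finite S"
  shows "sum (w(u := w u + (c::nat))) S = sum w S + (if u \<in> S then c else 0)"
proof -
  have "sum (w(u := w u + c)) S = sum (\<lambda>x. w x + (if x = u then c else 0)) S"
    by (rule sum.cong) auto
  also have "\<dots> = sum w S + (if u \<in> S then c else 0)"
    using assms by (simp add: sum.distrib)
  finally show ?thesis .
qed

definition Edel :: "('v \<Rightarrow> 'v \<Rightarrow> bool) \<Rightarrow> 'v \<Rightarrow> 'v \<Rightarrow> 'v \<Rightarrow> 'v \<Rightarrow> bool" where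
  "Edel E u v x y \<longleftrightarrow> E x y \<and> \<not> ((x = u \<and> y = v) \<or> (x = v \<and> y = u))"

definition Econ :: "('v \<Rightarrow> 'v \<Rightarrow> bool) \<Rightarrow> 'v \<Rightarrow> 'v \<Rightarrow> 'v \<Rightarrow> 'v \<Rightarrow> bool" where
  "Econ E u v x y \<longleftrightarrow> x \<noteq> y \<and> (E x y \<or> (x = u \<and> E v y) \<or> (y = u \<and> E x v))"

lemma wcsf_dc:
  assumes fin: "finite V" and uV: "u \<in> V" and vV: "v \<in> V" and uv: "u \<noteq> v" and Euv: "E u v"
    and irr: "\<forall>x\<in>V. \<not> E x x" and pos: "\<forall>x\<in>V. 0 < w x"
  shows "wcsf V (Edel E u v) w \<alpha> = wcsf V E w \<alpha> + wcsf (V - {v}) (Econ E u v) (w(u := w u + w v)) \<alpha>"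
proof -
  let ?V' = "V - {v}" and ?w' = "w(u := w u + w v)"
  let ?D = "{\<kappa>. \<kappa> \<in> V \<rightarrow>\<^sub>E {1..} \<and> proper_colouring V (Edel E u v) \<kappa> \<and>
       (\<forall>i. (\<Sum>v\<in>{v\<in>V. \<kappa> v = i}. w v) = \<alpha> i)}"
  let ?A = "{\<kappa>. \<kappa> \<in> V \<rightarrow>\<^sub>E {1..} \<and> proper_colouring V E \<kappa> \<and>
       (\<forall>i. (\<Sum>v\<in>{v\<in>V. \<kappa> v = i}. w v) = \<alpha> i)}"
  let ?D' = "{\<kappa>\<in>?D. \<kappa> u = \<kappa> v}"
  let ?C = "{\<kappa>. \<kappa> \<in> ?V' \<rightarrow>\<^sub>E {1..} \<and> proper_colouring ?V' (Econ E u v) \<kappa> \<and>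
       (\<forall>i. (\<Sum>v\<in>{v\<in>?V'. \<kappa> v = i}. ?w' v) = \<alpha> i)}"
  have finD: "finite ?D" by (rule fin_col[OF fin pos])
  have AD: "?A = {\<kappa>\<in>?D. \<kappa> u \<noteq> \<kappa> v}"
  proof (rule set_eqI, rule iffI)
    fix \<kappa> assume "\<kappa> \<in> ?A"
    then show "\<kappa> \<in> {\<kappa>\<in>?D. \<kappa> u \<noteq> \<kappa> v}"
      using uV vV Euv unfolding proper_colouring_def Edel_def by auto
  next
    fix \<kappa> assume k: "\<kappa> \<in> {\<kappa>\<in>?D. \<kappa> u \<noteq> \<kappa> v}"
    have "proper_colouring V E \<kappa>"
      unfolding proper_colouring_def
    proof (intro ballI impI)
      fix x y assume "x \<in> V" "y \<in> V" "E x y"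
      then show "\<kappa> x \<noteq> \<kappa> y" using k unfolding proper_colouring_def Edel_def
        by (cases "(x = u \<and> y = v) \<or> (x = v \<and> y = u)") auto
    qed
    then show "\<kappa> \<in> ?A" using k by blast
  qed
  have split: "?D = ?A \<union> ?D'" and disj: "?A \<inter> ?D' = {}" using AD by auto
  have cardD: "card ?D = card ?A + card ?D'"
    using finD split disj by (metis (no_types, lifting) card_Un_disjoint finite_Un)
  have sumeq: "(\<Sum>x\<in>{x\<in>?V'. \<kappa> x = i}. ?w' x) = (\<Sum>x\<in>{x\<in>V. \<kappa> x = i}. w x)"
    if kuv: "\<kappa> u = \<kappa> v" for \<kappa> :: "'a \<Rightarrow> nat" and i
  proof (cases "\<kappa> u = i")
    case True
    have fin': "finite {x\<in>?V'. \<kappa> x = i}" using fin by auto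
    have "(\<Sum>x\<in>{x\<in>?V'. \<kappa> x = i}. ?w' x) = (\<Sum>x\<in>{x\<in>?V'. \<kappa> x = i}. w x) + w v"
      using sum_upd_plus[OF fin', of w u "w v"] True uV uv by auto
    moreover have "{x\<in>V. \<kappa> x = i} = insert v {x\<in>?V'. \<kappa> x = i}" using True kuv vV by auto
    ultimately show ?thesis using fin' by simp
  next
    case False
    have fin': "finite {x\<in>?V'. \<kappa> x = i}" using fin by auto
    have "(\<Sum>x\<in>{x\<in>?V'. \<kappa> x = i}. ?w' x) = (\<Sum>x\<in>{x\<in>?V'. \<kappa> x = i}. w x)"
      using sum_upd_plus[OF fin', of w u "w v"] False by auto
    moreover have "{x\<in>V. \<kappa> x = i} = {x\<in>?V'. \<kappa> x = i}" using False kuv by auto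
    ultimately show ?thesis by simp
  qed
  have "bij_betw (\<lambda>\<kappa>. restrict \<kappa> ?V') ?D' ?C"
  proof (rule bij_betw_byWitness[where f'="\<lambda>\<kappa>. restrict (\<lambda>x. if x = v then \<kappa> u else \<kappa> x) V"])
    show "\<forall>a\<in>?D'. restrict (\<lambda>x. if x = v then restrict a ?V' u else restrict a ?V' x) V = a"
      using uV uv by (auto simp: fun_eq_iff PiE_def extensional_def)
    show "\<forall>a\<in>?C. restrict (restrict (\<lambda>x. if x = v then a u else a x) V) ?V' = a"
      by (auto simp: fun_eq_iff PiE_def extensional_def)
    show "(\<lambda>\<kappa>. restrict \<kappa> ?V') ` ?D' \<subseteq> ?C"
    proof (rule image_subsetI)
      fix \<kappa> assume k: "\<kappa> \<in> ?D'"
      have 1: "restrict \<kappa> ?V' \<in> ?V' \<rightarrow>\<^sub>E {1..}" using k by auto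
      have 2: "proper_colouring ?V' (Econ E u v) (restrict \<kappa> ?V')"
        unfolding proper_colouring_def
      proof (intro ballI impI)
        fix x y assume x: "x \<in> ?V'" and y: "y \<in> ?V'" and e: "Econ E u v x y"
        have pr: "\<And>a b. a \<in> V \<Longrightarrow> b \<in> V \<Longrightarrow> Edel E u v a b \<Longrightarrow> \<kappa> a \<noteq> \<kappa> b"
          using k unfolding proper_colouring_def by blast
        have "\<kappa> x \<noteq> \<kappa> y"
        proof -
          consider "E x y" | "x = u \<and> E v y" | "y = u \<and> E x v" using e unfolding Econ_def by blast
          then show ?thesis
          proof cases
            case 1 then show ?thesis using pr[of x y] x y unfolding Edel_def by auto
          next
            case 2 then show ?thesis using pr[of v y] x y e vV k unfolding Edel_def Econ_def by auto
          next
            case 3 then show ?thesis using pr[of x v] x y e vV k unfolding Edel_def Econ_def by auto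
          qed
        qed
        then show "restrict \<kappa> ?V' x \<noteq> restrict \<kappa> ?V' y" using x y by auto
      qed
      have 3: "(\<Sum>x\<in>{x\<in>?V'. restrict \<kappa> ?V' x = i}. ?w' x) = \<alpha> i" for i
      proof -
        have "{x\<in>?V'. restrict \<kappa> ?V' x = i} = {x\<in>?V'. \<kappa> x = i}" by auto
        then show ?thesis using sumeq[of \<kappa> i] k by auto
      qed
      show "restrict \<kappa> ?V' \<in> ?C" using 1 2 3 by blast
    qed
    show "(\<lambda>\<kappa>. restrict (\<lambda>x. if x = v then \<kappa> u else \<kappa> x) V) ` ?C \<subseteq> ?D'"
    proof (rule image_subsetI)
      fix \<kappa> assume k: "\<kappa> \<in> ?C"
      define \<kappa>' where "\<kappa>' = restrict (\<lambda>x. if x = v then \<kappa> u else \<kappa> x) V"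
      have kuv: "\<kappa>' u = \<kappa>' v" using uV vV uv unfolding \<kappa>'_def by auto
      have 1: "\<kappa>' \<in> V \<rightarrow>\<^sub>E {1..}" using k uV uv unfolding \<kappa>'_def by auto
      have 2: "proper_colouring V (Edel E u v) \<kappa>'"
        unfolding proper_colouring_def
      proof (intro ballI impI)
        fix x y assume x: "x \<in> V" and y: "y \<in> V" and e: "Edel E u v x y"
        have pr: "\<And>a b. a \<in> ?V' \<Longrightarrow> b \<in> ?V' \<Longrightarrow> Econ E u v a b \<Longrightarrow> \<kappa> a \<noteq> \<kappa> b"
          using k unfolding proper_colouring_def by blast
        have xy: "x \<noteq> y" using e irr x unfolding Edel_def by auto
        show "\<kappa>' x \<noteq> \<kappa>' y"
        proof (cases "x = v")
          case True
          then have "y \<noteq> u" "y \<noteq> v" using e xy unfolding Edel_def by auto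
          then have "Econ E u v u y" using e True uv unfolding Econ_def Edel_def by auto
          then show ?thesis using pr[of u y] True \<open>y \<noteq> v\<close> x y uV uv unfolding \<kappa>'_def by auto
        next
          case False
          show ?thesis
          proof (cases "y = v")
            case True
            then have "x \<noteq> u" using e xy unfolding Edel_def by auto
            then have "Econ E u v x u" using e True \<open>x \<noteq> v\<close> unfolding Econ_def Edel_def by auto
            then show ?thesis using pr[of x u] True \<open>x \<noteq> v\<close> x y uV uv unfolding \<kappa>'_def by auto
          next
            case yv: False
            then have "Econ E u v x y" using e xy unfolding Econ_def Edel_def by auto
            then show ?thesis using pr[of x y] False yv x y unfolding \<kappa>'_def by auto
          qed
        qed
      qed
      have rk: "restrict \<kappa>' ?V' = \<kappa>" using k unfolding \<kappa>'_def
        by (auto simp: fun_eq_iff PiE_def extensional_def)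
      have 3: "(\<Sum>x\<in>{x\<in>V. \<kappa>' x = i}. w x) = \<alpha> i" for i
      proof -
        have "{x\<in>?V'. \<kappa>' x = i} = {x\<in>?V'. \<kappa> x = i}" using rk by auto
        then show ?thesis using sumeq[OF kuv, of i] k by auto
      qed
      show "\<kappa>' \<in> ?D'" using 1 2 3 kuv by blast
    qed
  qed
  then have "card ?D' = card ?C" by (rule bij_betw_same_card)
  then show ?thesis unfolding wcsf_def using cardD by simp
qed


lemma wcsf_cong:
  assumes "\<forall>x\<in>V. \<forall>y\<in>V. E x y = E' x y" "\<forall>x\<in>V. w x = w' x"
  shows "wcsf V E w \<alpha> = wcsf V E' w' \<alpha>"
  by (rule wcsf_iso[where f=id]) (use assms in auto)

definition pp :: "nat list \<Rightarrow> (nat \<Rightarrow> nat) \<Rightarrow> nat" where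
  "pp \<nu> \<alpha> = wcsf {..<length \<nu>} (\<lambda>_ _. False) (\<lambda>j. \<nu> ! j) \<alpha>"

lemma pp_mset:
  assumes "mset \<nu> = mset \<nu>'"
  shows "pp \<nu> \<alpha> = pp \<nu>' \<alpha>"
proof -
  obtain p where p: "p permutes {..<length \<nu>'}" "permute_list p \<nu>' = \<nu>"
    using mset_eq_permutation[OF assms] by blast
  have len: "length \<nu> = length \<nu>'" using p(2) by (metis length_permute_list)
  have nth: "\<nu> ! i = \<nu>' ! p i" if "i < length \<nu>" for i
  proof -
    have "\<nu> ! i = permute_list p \<nu>' ! i" using p(2) by simp
    also have "\<dots> = \<nu>' ! p i" using that len by (simp add: permute_list_def)
    finally show ?thesis .
  qed
  show ?thesis unfolding pp_def
    by (rule wcsf_iso[where f=p]) (use permutes_imp_bij[OF p(1)] len nth in auto)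
qed

lemma wcsf_edgeless:
  assumes h: "bij_betw h {0..<card V} V" and ne: "\<forall>x\<in>V. \<forall>y\<in>V. \<not> E x y"
  shows "wcsf V E w \<alpha> = pp (map (w \<circ> h) [0..<card V]) \<alpha>"
proof -
  have "pp (map (w \<circ> h) [0..<card V]) \<alpha> = wcsf V (\<lambda>_ _. False) w \<alpha>"
    unfolding pp_def by (rule wcsf_iso[where f=h]) (use h in \<open>auto simp: atLeast0LessThan\<close>)
  also have "\<dots> = wcsf V E w \<alpha>" by (rule wcsf_cong) (use ne in auto)
  finally show ?thesis by simp
qed

definition sd :: "nat list \<Rightarrow> nat list" where "sd xs = rev (sort xs)"

lemma mset_sd[simp]: "mset (sd xs) = mset xs" unfolding sd_def by simp

lemma sum_list_mset_eq: "mset xs = mset ys \<Longrightarrow> sum_list xs = (sum_list ys :: nat)"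
  by (metis sum_mset_sum_list)

lemma sd_partition: "0 \<notin> set xs \<Longrightarrow> sd xs \<in> partitions (sum_list xs)"
  unfolding partitions_def sd_def
  by (auto simp: sorted_wrt_rev sum_list_mset_eq[of "sort xs" xs])

lemma length_le_sum_list: "0 \<notin> set (xs::nat list) \<Longrightarrow> length xs \<le> sum_list xs"
  by (induction xs) (auto simp: Suc_le_eq)

lemma partitions_length: "lam \<in> partitions n \<Longrightarrow> length lam \<le> n"
  unfolding partitions_def using length_le_sum_list by auto

lemma finite_partitions: "finite (partitions n)"
proof (rule finite_subset)
  show "partitions n \<subseteq> {xs. set xs \<subseteq> {..n} \<and> length xs \<le> n}"
    unfolding partitions_def using length_le_sum_list elem_le_sum_list
    by (force simp: in_set_conv_nth intro: elem_le_sum_list)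
  show "finite {xs. set xs \<subseteq> {..n} \<and> length xs \<le> n}" by (rule finite_lists_length_le) simp
qed

definition lin :: "(nat list \<Rightarrow> (nat \<Rightarrow> nat) \<Rightarrow> rat) \<Rightarrow> nat list set \<Rightarrow> ((nat \<Rightarrow> nat) \<Rightarrow> rat) \<Rightarrow> bool" where
  "lin B S f \<longleftrightarrow> (\<exists>c. \<forall>\<alpha>. f \<alpha> = (\<Sum>\<mu>\<in>S. c \<mu> * B \<mu> \<alpha>))"

lemma lin_add: "lin B S f \<Longrightarrow> lin B S g \<Longrightarrow> lin B S (\<lambda>\<alpha>. f \<alpha> + g \<alpha>)"
  unfolding lin_def
proof (elim exE)
  fix c d assume c: "\<forall>\<alpha>. f \<alpha> = (\<Sum>\<mu>\<in>S. c \<mu> * B \<mu> \<alpha>)" and d: "\<forall>\<alpha>. g \<alpha> = (\<Sum>\<mu>\<in>S. d \<mu> * B \<mu> \<alpha>)"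
  show "\<exists>e. \<forall>\<alpha>. f \<alpha> + g \<alpha> = (\<Sum>\<mu>\<in>S. e \<mu> * B \<mu> \<alpha>)"
    by (rule exI[of _ "\<lambda>\<mu>. c \<mu> + d \<mu>"]) (simp add: c d sum.distrib distrib_right)
qed

lemma lin_smult: "lin B S f \<Longrightarrow> lin B S (\<lambda>\<alpha>. r * f \<alpha>)"
  unfolding lin_def
proof (elim exE)
  fix c assume c: "\<forall>\<alpha>. f \<alpha> = (\<Sum>\<mu>\<in>S. c \<mu> * B \<mu> \<alpha>)"
  show "\<exists>e. \<forall>\<alpha>. r * f \<alpha> = (\<Sum>\<mu>\<in>S. e \<mu> * B \<mu> \<alpha>)"
    by (rule exI[of _ "\<lambda>\<mu>. r * c \<mu>"]) (simp add: c sum_distrib_left mult.assoc)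
qed

lemma lin_diff: "lin B S f \<Longrightarrow> lin B S g \<Longrightarrow> lin B S (\<lambda>\<alpha>. f \<alpha> - g \<alpha>)"
  using lin_add[of B S f "\<lambda>\<alpha>. (-1) * g \<alpha>"] lin_smult[of B S g "-1"] by simp

lemma lin_basis: "finite S \<Longrightarrow> \<mu> \<in> S \<Longrightarrow> lin B S (B \<mu>)"
  unfolding lin_def
proof (rule exI[of _ "\<lambda>\<nu>. if \<nu> = \<mu> then 1 else 0"], rule allI)
  fix \<alpha> assume "finite S" "\<mu> \<in> S"
  have "(\<Sum>\<nu>\<in>S. (if \<nu> = \<mu> then 1 else 0) * B \<nu> \<alpha>) = (\<Sum>\<nu>\<in>S. if \<nu> = \<mu> then B \<nu> \<alpha> else 0)"
    by (rule sum.cong) auto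
  also have "\<dots> = B \<mu> \<alpha>" using \<open>finite S\<close> \<open>\<mu> \<in> S\<close> by (simp add: sum.delta')
  finally show "B \<mu> \<alpha> = (\<Sum>\<nu>\<in>S. (if \<nu> = \<mu> then 1 else 0) * B \<nu> \<alpha>)" by simp
qed

lemma lin_mono: "S \<subseteq> T \<Longrightarrow> finite T \<Longrightarrow> lin B S f \<Longrightarrow> lin B T f"
  unfolding lin_def
proof (elim exE)
  fix c assume ST: "S \<subseteq> T" "finite T" and c: "\<forall>\<alpha>. f \<alpha> = (\<Sum>\<mu>\<in>S. c \<mu> * B \<mu> \<alpha>)"
  show "\<exists>e. \<forall>\<alpha>. f \<alpha> = (\<Sum>\<mu>\<in>T. e \<mu> * B \<mu> \<alpha>)"
  proof (rule exI[of _ "\<lambda>\<mu>. if \<mu> \<in> S then c \<mu> else 0"], rule allI)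
    fix \<alpha>
    have "(\<Sum>\<mu>\<in>T. (if \<mu> \<in> S then c \<mu> else 0) * B \<mu> \<alpha>) = (\<Sum>\<mu>\<in>T. if \<mu> \<in> S then c \<mu> * B \<mu> \<alpha> else 0)"
      by (rule sum.cong) auto
    also have "\<dots> = (\<Sum>\<mu>\<in>S. c \<mu> * B \<mu> \<alpha>)"
      using ST by (simp add: sum.If_cases Int_absorb1)
    finally show "f \<alpha> = (\<Sum>\<mu>\<in>T. (if \<mu> \<in> S then c \<mu> else 0) * B \<mu> \<alpha>)" using c by simp
  qed
qed

lemma lin_sum: "finite I \<Longrightarrow> (\<And>i. i \<in> I \<Longrightarrow> lin B S (g i)) \<Longrightarrow> lin B S (\<lambda>\<alpha>. \<Sum>i\<in>I. r i * g i \<alpha>)"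
proof (induction I rule: finite_induct)
  case empty
  show ?case unfolding lin_def by (rule exI[of _ "\<lambda>_. 0"]) simp
next
  case (insert x F)
  then show ?case using lin_add[OF lin_smult[of B S "g x" "r x"]] by simp
qed

lemma lin_trans:
  assumes "lin B S f" "\<forall>\<mu>\<in>S. lin B' T (B \<mu>)" "finite S"
  shows "lin B' T f"
proof -
  obtain c where c: "\<forall>\<alpha>. f \<alpha> = (\<Sum>\<mu>\<in>S. c \<mu> * B \<mu> \<alpha>)" using assms(1) unfolding lin_def by blast
  have "lin B' T (\<lambda>\<alpha>. \<Sum>\<mu>\<in>S. c \<mu> * B \<mu> \<alpha>)" by (rule lin_sum) (use assms in auto)
  then show ?thesis using c by (metis (no_types, lifting) ext)
qed


abbreviation P :: "nat list \<Rightarrow> (nat \<Rightarrow> nat) \<Rightarrow> rat" where "P \<mu> \<alpha> \<equiv> of_nat (pp \<mu> \<alpha>)"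

lemma edgeless_lin:
  assumes fin: "finite V" and ne: "\<forall>x\<in>V. \<forall>y\<in>V. \<not> E x y" and pos: "\<forall>x\<in>V. 0 < w x"
  shows "lin P (partitions (sum w V)) (\<lambda>\<alpha>. of_nat (wcsf V E w \<alpha>))"
proof -
  obtain h where h: "bij_betw h {0..<card V} V" using ex_bij_betw_nat_finite[OF fin] by blast
  define \<nu> where "\<nu> = map (w \<circ> h) [0..<card V]"
  have "sum_list \<nu> = (\<Sum>i\<in>{0..<card V}. w (h i))"
    unfolding \<nu>_def by (simp add: sum_list_distinct_conv_sum_set)
  also have "\<dots> = sum w V" using sum.reindex_bij_betw[OF h, of w] by simp
  finally have s: "sum_list \<nu> = sum w V" .
  have z: "0 \<notin> set \<nu>" unfolding \<nu>_def using pos h bij_betwE by fastforce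
  have mem: "sd \<nu> \<in> partitions (sum w V)" using sd_partition[OF z] s by simp
  have "\<forall>\<alpha>. wcsf V E w \<alpha> = pp (sd \<nu>) \<alpha>"
    using wcsf_edgeless[OF h ne] pp_mset[of "sd \<nu>" \<nu>] unfolding \<nu>_def by simp
  then have eq: "(\<lambda>\<alpha>. of_nat (wcsf V E w \<alpha>) :: rat) = P (sd \<nu>)" by auto
  show ?thesis unfolding eq by (rule lin_basis[OF finite_partitions mem])
qed

lemma thmA:
  assumes "finite V" "\<forall>x\<in>V. \<not> E x x" "\<forall>x\<in>V. 0 < w x"
  shows "lin P (partitions (sum w V)) (\<lambda>\<alpha>. of_nat (wcsf V E w \<alpha>))"
  using assms
proof (induction "card V" arbitrary: V E w rule: less_induct)
  case less
  note outer = less.hyps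
  define m where "m = card {(x,y). x \<in> V \<and> y \<in> V \<and> E x y}"
  from less.prems m_def show ?case
  proof (induction m arbitrary: E rule: less_induct)
    case (less m E)
    have fin: "finite V" and irr: "\<forall>x\<in>V. \<not> E x x" and pos: "\<forall>x\<in>V. 0 < w x"
      using less.prems by auto
    show ?case
    proof (cases "\<forall>x\<in>V. \<forall>y\<in>V. \<not> E x y")
      case True
      then show ?thesis using edgeless_lin[OF fin True pos] by simp
    next
      case False
      then obtain u v where uV: "u \<in> V" and vV: "v \<in> V" and Euv: "E u v" by blast
      have uv: "u \<noteq> v" using irr Euv uV by auto
      have finE: "finite {(x,y). x \<in> V \<and> y \<in> V \<and> E x y}"
        by (rule finite_subset[of _ "V \<times> V"]) (use fin in auto)
      have sub: "{(x,y). x \<in> V \<and> y \<in> V \<and> Edel E u v x y} \<subset> {(x,y). x \<in> V \<and> y \<in> V \<and> E x y}"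
        using uV vV Euv unfolding Edel_def by auto
      have lt: "card {(x,y). x \<in> V \<and> y \<in> V \<and> Edel E u v x y} < m"
        using psubset_card_mono[OF finE sub] less.prems by simp
      have irr': "\<forall>x\<in>V. \<not> Edel E u v x x" using irr unfolding Edel_def by auto
      have L1: "lin P (partitions (sum w V)) (\<lambda>\<alpha>. of_nat (wcsf V (Edel E u v) w \<alpha>))"
        using less.IH[of _ "Edel E u v", OF lt fin irr' pos] by simp
      have cV: "card (V - {v}) < card V" using fin vV by (meson card_Diff1_less)
      have pos': "\<forall>x\<in>V - {v}. 0 < (w(u := w u + w v)) x" using pos by auto
      have irr'': "\<forall>x\<in>V - {v}. \<not> Econ E u v x x" unfolding Econ_def by auto
      have ssum: "sum (w(u := w u + w v)) (V - {v}) = sum w V"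
        using sum_upd_plus[of "V - {v}" w u "w v"] fin uV uv vV
        by (simp add: sum.remove[OF fin vV])
      have L2: "lin P (partitions (sum w V)) (\<lambda>\<alpha>. of_nat (wcsf (V - {v}) (Econ E u v) (w(u := w u + w v)) \<alpha>))"
        using outer[of "V - {v}" "Econ E u v" "w(u := w u + w v)", OF cV _ irr'' pos'] fin ssum by simp
      have dc: "(of_nat (wcsf V E w \<alpha>) :: rat) = of_nat (wcsf V (Edel E u v) w \<alpha>) - of_nat (wcsf (V - {v}) (Econ E u v) (w(u := w u + w v)) \<alpha>)" for \<alpha>
        using wcsf_dc[OF fin uV vV uv Euv irr pos, of \<alpha>] by simp
      show ?thesis unfolding dc by (rule lin_diff[OF L1 L2])
    qed
  qed
qed


definition PV :: "nat list list \<Rightarrow> (nat \<times> nat) set" where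
  "PV L = {(j, i). j < length L \<and> i < length (L ! j)}"

definition PW :: "nat list list \<Rightarrow> nat \<times> nat \<Rightarrow> nat" where
  "PW L x = L ! fst x ! snd x"

definition PEd :: "nat \<times> nat \<Rightarrow> nat \<times> nat \<Rightarrow> bool" where
  "PEd u v \<longleftrightarrow> fst u = fst v \<and> (snd v = snd u + 1 \<or> snd u = snd v + 1)"

lemma path_edges_PEd: "path_edges lam = PEd"
  unfolding path_edges_def PEd_def by (intro ext) simp

lemma mem_PV[simp]: "(a, b) \<in> PV L \<longleftrightarrow> a < length L \<and> b < length (L ! a)"
  unfolding PV_def by simp

lemma PV_Sigma: "PV L = Sigma {..<length L} (\<lambda>j. {..<length (L ! j)})"
  unfolding PV_def by auto

lemma finite_PV: "finite (PV L)" unfolding PV_Sigma by auto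

lemma card_PV: "card (PV L) = (\<Sum>j<length L. length (L ! j))"
  unfolding PV_Sigma by (simp add: card_SigmaI)

definition vld :: "nat list list \<Rightarrow> bool" where
  "vld L \<longleftrightarrow> (\<forall>p\<in>set L. p \<noteq> [] \<and> 0 \<notin> set p)"

definition psums :: "nat list list \<Rightarrow> nat list" where "psums L = map sum_list L"

definition total :: "nat list list \<Rightarrow> nat" where "total L = sum_list (psums L)"

definition ned :: "nat list list \<Rightarrow> nat" where "ned L = card (PV L) - length L"

lemma vld_pos: "vld L \<Longrightarrow> \<forall>x\<in>PV L. 0 < PW L x"
  unfolding vld_def PW_def PV_def
  by (auto simp: in_set_conv_nth) (metis gr_zeroI nth_mem)

lemma vld_sums: "vld L \<Longrightarrow> 0 \<notin> set (psums L)"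
  unfolding vld_def psums_def by (auto simp: sum_list_eq_0_iff) (metis list.set_sel(1) neq0_conv)

lemma vld_sd: "vld L \<Longrightarrow> sd (psums L) \<in> partitions (total L)"
  unfolding total_def using sd_partition vld_sums by blast

lemma length_sd[simp]: "length (sd xs) = length xs"
  unfolding sd_def by simp


lemma total_PV: "total L = sum (PW L) (PV L)"
proof -
  have "sum (PW L) (PV L) = (\<Sum>(j,i)\<in>Sigma {..<length L} (\<lambda>j. {..<length (L ! j)}). L ! j ! i)"
    unfolding PV_Sigma PW_def by (rule sum.cong) auto
  also have "\<dots> = (\<Sum>j<length L. \<Sum>i<length (L ! j). L ! j ! i)"
    by (simp add: sum.Sigma)
  also have "\<dots> = (\<Sum>j<length L. sum_list (L ! j))"
    by (simp add: sum_list_sum_nth atLeast0LessThan)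
  also have "\<dots> = total L"
    unfolding total_def psums_def by (simp add: sum_list_sum_nth atLeast0LessThan)
  finally show ?thesis by simp
qed

lemma card_PV_ge:
  assumes "vld L" "j < length L" "2 \<le> length (L ! j)"
  shows "length L + 1 \<le> card (PV L)"
proof -
  have ne: "\<And>k. k < length L \<Longrightarrow> 1 \<le> length (L ! k)" using assms(1) unfolding vld_def
    by (metis One_nat_def Suc_leI length_greater_0_conv nth_mem)
  have "(\<Sum>k<length L. length (L ! k)) = (\<Sum>k<length L. 1 + (length (L ! k) - 1))"
    by (rule sum.cong) (use ne in force)+
  also have "\<dots> = length L + (\<Sum>k<length L. length (L ! k) - 1)"
    by (simp only: sum.distrib) simp
  finally have eq: "(\<Sum>k<length L. length (L ! k)) = length L + (\<Sum>k<length L. length (L ! k) - 1)" .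
  have "length (L ! j) - 1 \<le> (\<Sum>k<length L. length (L ! k) - 1)"
    by (rule member_le_sum) (use assms in auto)
  then show ?thesis unfolding card_PV eq using assms(3) by simp
qed


definition L1f :: "nat list list \<Rightarrow> nat \<Rightarrow> nat list list" where
  "L1f L j = L[j := take (length (L ! j) - 1) (L ! j)] @ [[L ! j ! (length (L ! j) - 1)]]"

definition L2f :: "nat list list \<Rightarrow> nat \<Rightarrow> nat list list" where
  "L2f L j = L[j := take (length (L ! j) - 2) (L ! j) @ [L ! j ! (length (L ! j) - 2) + L ! j ! (length (L ! j) - 1)]]"

lemma len_L1: "length (L1f L j) = length L + 1" unfolding L1f_def by simp
lemma len_L2: "length (L2f L j) = length L" unfolding L2f_def by simp

lemma L1_nth:
  assumes "j < length L" "a \<le> length L"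
  shows "L1f L j ! a = (if a = length L then [L ! j ! (length (L ! j) - 1)] else if a = j then take (length (L ! j) - 1) (L ! j) else L ! a)"
  using assms unfolding L1f_def
  by (cases "a < length L") (auto simp: nth_append nth_list_update)

lemma mem_PV_L1:
  assumes "j < length L" "2 \<le> length (L ! j)"
  shows "(a, b) \<in> PV (L1f L j) \<longleftrightarrow> (a < length L \<and> a \<noteq> j \<and> b < length (L ! a)) \<or> (a = j \<and> b < length (L ! j) - 1) \<or> (a = length L \<and> b = 0)"
proof (cases "a \<le> length L")
  case True
  then show ?thesis using assms unfolding mem_PV len_L1 L1_nth[OF assms(1) True]
    by (auto simp: less_Suc_eq)
qed (use assms in \<open>auto simp: len_L1\<close>)

lemma PV_L2:
  assumes "j < length L" "2 \<le> length (L ! j)"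
  shows "PV (L2f L j) = PV L - {(j, length (L ! j) - 1)}"
proof -
  have "length (take (length (L ! j) - 2) (L ! j) @ [L ! j ! (length (L ! j) - 2) + L ! j ! (length (L ! j) - 1)]) = length (L ! j) - 1"
    using assms by simp
  then show ?thesis unfolding L2f_def PV_def using assms
    by (auto simp: nth_list_update split: if_splits)
qed


lemma del_iso:
  assumes jL: "j < length L" and m2: "2 \<le> length (L ! j)"
  defines "uu \<equiv> (j, length (L ! j) - 2)" and "vv \<equiv> (j, length (L ! j) - 1)"
  shows "wcsf (PV L) (Edel PEd uu vv) (PW L) \<alpha> = wcsf (PV (L1f L j)) PEd (PW (L1f L j)) \<alpha>
    \<and> sum (PW L) (PV L) = sum (PW (L1f L j)) (PV (L1f L j))
    \<and> card (PV (L1f L j)) = card (PV L)"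
proof -
  define f where "f x = (if x = vv then (length L, 0) else x)" for x
  define g where "g y = (if y = (length L, 0) then vv else y)" for y
  have vvL: "vv \<in> PV L" using jL m2 unfolding vv_def by simp
  have fin: "\<forall>a\<in>PV L. g (f a) = a"
  proof
    fix a assume a: "a \<in> PV L"
    then have "fst a < length L" unfolding PV_def by auto
    then show "g (f a) = a" unfolding f_def g_def by auto
  qed
  have gin: "\<forall>a\<in>PV (L1f L j). f (g a) = a"
  proof
    fix a assume a: "a \<in> PV (L1f L j)"
    obtain x y where xy: "a = (x, y)" by fastforce
    have "a \<noteq> vv" using a jL m2 unfolding xy vv_def mem_PV_L1[OF jL m2] by auto
    then show "f (g a) = a" unfolding f_def g_def by auto
  qed
  have fsub: "f ` PV L \<subseteq> PV (L1f L j)"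
  proof
    fix b assume "b \<in> f ` PV L"
    then obtain a where a: "a \<in> PV L" "b = f a" by blast
    obtain x y where xy: "a = (x, y)" by fastforce
    show "b \<in> PV (L1f L j)"
    proof (cases "a = vv")
      case True
      then have "b = (length L, 0)" using a unfolding f_def by simp
      then show ?thesis using mem_PV_L1[OF jL m2, of "length L" 0] by simp
    next
      case False
      then have "b = (x, y)" using a xy unfolding f_def by simp
      moreover have "(x, y) \<in> PV (L1f L j)" unfolding mem_PV_L1[OF jL m2]
        using a(1) False unfolding xy vv_def by auto
      ultimately show ?thesis by simp
    qed
  qed
  have gsub: "g ` PV (L1f L j) \<subseteq> PV L"
  proof
    fix b assume "b \<in> g ` PV (L1f L j)"
    then obtain a where a: "a \<in> PV (L1f L j)" "b = g a" by blast
    obtain x y where xy: "a = (x, y)" by fastforce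
    show "b \<in> PV L"
    proof (cases "a = (length L, 0)")
      case True
      then show ?thesis using a vvL unfolding g_def by simp
    next
      case False
      then have "b = (x, y)" using a xy False unfolding g_def by auto
      moreover have "(x, y) \<in> PV (L1f L j)" using a xy by simp
      then have "(x, y) \<in> PV L" unfolding mem_PV_L1[OF jL m2] using jL m2 False xy by auto
      ultimately show ?thesis by simp
    qed
  qed
  have bij: "bij_betw f (PV L) (PV (L1f L j))"
    by (rule bij_betw_byWitness[where f'=g, OF fin gin fsub gsub])
  have w: "\<forall>x\<in>PV L. PW (L1f L j) (f x) = PW L x"
  proof
    fix x assume x: "x \<in> PV L"
    obtain a b where ab: "x = (a, b)" by fastforce
    show "PW (L1f L j) (f x) = PW L x"
    proof (cases "x = vv")
      case True
      then show ?thesis unfolding f_def PW_def using L1_nth[OF jL, of "length L"] by (simp add: vv_def)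
    next
      case False
      then show ?thesis using x unfolding f_def PW_def ab vv_def using L1_nth[OF jL, of a] by auto
    qed
  qed
  have E: "\<forall>x\<in>PV L. \<forall>y\<in>PV L. Edel PEd uu vv x y = PEd (f x) (f y)"
  proof (intro ballI)
    fix x y assume x: "x \<in> PV L" and y: "y \<in> PV L"
    obtain a b where xab: "x = (a, b)" by fastforce
    obtain c d where ycd: "y = (c, d)" by fastforce
    have a: "a < length L" "b < length (L ! a)" using x xab by auto
    have c: "c < length L" "d < length (L ! c)" using y ycd by auto
    show "Edel PEd uu vv x y = PEd (f x) (f y)"
    proof (cases "x = vv")
      case xv: True
      show ?thesis
      proof (cases "y = vv")
        case True
        then show ?thesis using xv unfolding Edel_def PEd_def by auto
      next
        case False
        have "\<not> PEd (f x) (f y)" using False xv c unfolding f_def PEd_def ycd by auto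
        moreover have "\<not> Edel PEd uu vv x y" using xv False c m2 unfolding Edel_def PEd_def ycd vv_def uu_def by auto
        ultimately show ?thesis by simp
      qed
    next
      case xv: False
      show ?thesis
      proof (cases "y = vv")
        case True
        have "\<not> PEd (f x) (f y)" using True xv a unfolding f_def PEd_def xab by auto
        moreover have "\<not> Edel PEd uu vv x y" using xv True a m2 unfolding Edel_def PEd_def xab vv_def uu_def by auto
        ultimately show ?thesis by simp
      next
        case False
        then show ?thesis using xv unfolding f_def Edel_def by auto
      qed
    qed
  qed
  show ?thesis
    using wcsf_iso[OF bij E w] sum.reindex_bij_betw[OF bij, of "PW (L1f L j)"] w bij_betw_same_card[OF bij]
    by simp
qed

lemma con_iso:
  assumes jL: "j < length L" and m2: "2 \<le> length (L ! j)"
  defines "uu \<equiv> (j, length (L ! j) - 2)" and "vv \<equiv> (j, length (L ! j) - 1)"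
  shows "wcsf (PV L - {vv}) (Econ PEd uu vv) ((PW L)(uu := PW L uu + PW L vv)) \<alpha> = wcsf (PV (L2f L j)) PEd (PW (L2f L j)) \<alpha>"
proof -
  have w: "\<forall>x\<in>PV L - {vv}. PW (L2f L j) x = ((PW L)(uu := PW L uu + PW L vv)) x"
    unfolding vv_def uu_def PW_def PV_def L2f_def using m2 jL
    by (auto simp: nth_list_update nth_append min_def)
  have E: "\<forall>x\<in>PV L - {vv}. \<forall>y\<in>PV L - {vv}. Econ PEd uu vv x y = PEd x y"
    unfolding vv_def uu_def PV_def PEd_def Econ_def using m2 jL
    by auto
  show ?thesis unfolding PV_L2[OF jL m2] vv_def[symmetric] by (rule wcsf_cong) (use w E in auto)
qed

lemma psums_L2:
  assumes jL: "j < length L" and m2: "2 \<le> length (L ! j)"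
  shows "psums (L2f L j) = psums L"
proof -
  let ?p = "L ! j" and ?m = "length (L ! j)"
  have d: "drop (?m - 2) ?p = [?p ! (?m - 2), ?p ! (?m - 1)]"
  proof (rule nth_equalityI)
    show "length (drop (?m - 2) ?p) = length [?p ! (?m - 2), ?p ! (?m - 1)]" using m2 by simp
    show "drop (?m - 2) ?p ! i = [?p ! (?m - 2), ?p ! (?m - 1)] ! i"
      if "i < length (drop (?m - 2) ?p)" for i
      using that m2 by (auto simp: less_2_cases_iff)
  qed
  have "sum_list ?p = sum_list (take (?m - 2) ?p) + sum_list (drop (?m - 2) ?p)"
    by (metis append_take_drop_id sum_list_append)
  then have "sum_list ?p = sum_list (take (?m - 2) ?p @ [?p ! (?m - 2) + ?p ! (?m - 1)])"
    unfolding d by simp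
  then show ?thesis unfolding psums_def L2f_def using jL
    by (metis length_map list_update_id map_update nth_map)
qed

lemma vld_L1:
  assumes vL: "vld L" and jL: "j < length L" and m2: "2 \<le> length (L ! j)"
  shows "vld (L1f L j)"
  unfolding vld_def
proof
  fix q assume q: "q \<in> set (L1f L j)"
  have pj: "L ! j \<in> set L" using jL by simp
  have nz: "0 \<notin> set (L ! j)" using vL pj unfolding vld_def by auto
  have last: "L ! j ! (length (L ! j) - 1) \<in> set (L ! j)" using m2 by simp
  have "q \<in> insert (take (length (L ! j) - 1) (L ! j)) (set L) \<or> q = [L ! j ! (length (L ! j) - 1)]"
    using q set_update_subset_insert unfolding L1f_def by fastforce
  then show "q \<noteq> [] \<and> 0 \<notin> set q"
  proof
    assume "q \<in> insert (take (length (L ! j) - 1) (L ! j)) (set L)"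
    then show ?thesis using vL nz m2 unfolding vld_def by (auto dest: in_set_takeD)
  next
    assume "q = [L ! j ! (length (L ! j) - 1)]"
    moreover have "0 < L ! j ! (length (L ! j) - 1)" using nz last by (metis gr0I)
    ultimately show ?thesis by auto
  qed
qed

lemma vld_L2:
  assumes vL: "vld L" and jL: "j < length L" and m2: "2 \<le> length (L ! j)"
  shows "vld (L2f L j)"
  unfolding vld_def
proof
  fix q assume q: "q \<in> set (L2f L j)"
  have pj: "L ! j \<in> set L" using jL by simp
  have nz: "0 \<notin> set (L ! j)" using vL pj unfolding vld_def by auto
  have last: "L ! j ! (length (L ! j) - 1) \<in> set (L ! j)" using m2 by simp
  then have pos: "0 < L ! j ! (length (L ! j) - 1)" using nz by (metis gr0I)
  have "q \<in> set L \<or> q = take (length (L ! j) - 2) (L ! j) @ [L ! j ! (length (L ! j) - 2) + L ! j ! (length (L ! j) - 1)]"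
    using q set_update_subset_insert unfolding L2f_def by fastforce
  then show "q \<noteq> [] \<and> 0 \<notin> set q"
  proof
    assume "q \<in> set L"
    then show ?thesis using vL unfolding vld_def by auto
  next
    assume "q = take (length (L ! j) - 2) (L ! j) @ [L ! j ! (length (L ! j) - 2) + L ! j ! (length (L ! j) - 1)]"
    then show ?thesis using nz pos by (auto dest: in_set_takeD)
  qed
qed


lemma lin_zero: "lin B S (\<lambda>_. 0)"
  unfolding lin_def by (rule exI[of _ "\<lambda>_. 0"]) simp

lemma base_case:
  assumes vL: "vld L" and one: "\<forall>j<length L. length (L ! j) = 1"
  shows "wcsf (PV L) PEd (PW L) \<alpha> = pp (sd (psums L)) \<alpha>"
proof -
  have PVeq: "PV L = (\<lambda>j. (j, 0)) ` {..<length L}"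
    using one unfolding PV_def by auto
  have bij: "bij_betw (\<lambda>j. (j, 0::nat)) {..<length (psums L)} (PV L)"
    unfolding PVeq psums_def by (auto simp: bij_betw_def inj_on_def)
  have w: "\<forall>j\<in>{..<length (psums L)}. PW L (j, 0) = psums L ! j"
  proof
    fix j assume "j \<in> {..<length (psums L)}"
    then have j: "j < length L" by (simp add: psums_def)
    then obtain x where "L ! j = [x]" using one by (metis One_nat_def length_0_conv length_Suc_conv)
    then show "PW L (j, 0) = psums L ! j" using j unfolding PW_def psums_def by simp
  qed
  have "pp (psums L) \<alpha> = wcsf (PV L) PEd (PW L) \<alpha>"
    unfolding pp_def by (rule wcsf_iso[OF bij]) (use w in \<open>auto simp: PEd_def\<close>)
  then show ?thesis using pp_mset[of "sd (psums L)" "psums L" \<alpha>] by simp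
qed

lemma thmC:
  assumes "vld L"
  shows "\<exists>g. lin P {\<mu> \<in> partitions (total L). length L < length \<mu>} g \<and>
    (\<forall>\<alpha>. of_nat (wcsf (PV L) PEd (PW L) \<alpha>) = (-1) ^ (ned L) * P (sd (psums L)) \<alpha> + g \<alpha>)"
  using assms
proof (induction "ned L" arbitrary: L rule: less_induct)
  case less
  have vL: "vld L" by fact
  let ?S = "{\<mu> \<in> partitions (total L). length L < length \<mu>}"
  have finS: "finite ?S" using finite_partitions by simp
  show ?case
  proof (cases "\<exists>j<length L. 2 \<le> length (L ! j)")
    case False
    have one: "\<forall>j<length L. length (L ! j) = 1"
    proof (intro allI impI)
      fix j assume j: "j < length L"
      then have "L ! j \<noteq> []" using vL unfolding vld_def by auto
      moreover have "\<not> 2 \<le> length (L ! j)" using False j by blast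
      ultimately show "length (L ! j) = 1" by (cases "L ! j") (auto simp: Suc_le_eq)
    qed
    have "card (PV L) = length L" unfolding card_PV using one by simp
    then have "ned L = 0" unfolding ned_def by simp
    then show ?thesis using base_case[OF vL one] lin_zero by auto
  next
    case True
    then obtain j where jL: "j < length L" and m2: "2 \<le> length (L ! j)" by blast
    define uu where "uu = (j, length (L ! j) - 2)"
    define vv where "vv = (j, length (L ! j) - 1)"
    have c: "length L + 1 \<le> card (PV L)" by (rule card_PV_ge[OF vL jL m2])
    have D: "wcsf (PV L) (Edel PEd uu vv) (PW L) \<alpha> = wcsf (PV (L1f L j)) PEd (PW (L1f L j)) \<alpha>"
      "sum (PW L) (PV L) = sum (PW (L1f L j)) (PV (L1f L j))"
      "card (PV (L1f L j)) = card (PV L)" for \<alpha>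
      using del_iso[OF jL m2] unfolding uu_def vv_def by auto
    have C: "wcsf (PV L - {vv}) (Econ PEd uu vv) ((PW L)(uu := PW L uu + PW L vv)) \<alpha> = wcsf (PV (L2f L j)) PEd (PW (L2f L j)) \<alpha>" for \<alpha>
      using con_iso[OF jL m2] unfolding uu_def vv_def by auto
    have vvL: "vv \<in> PV L" and uuL: "uu \<in> PV L" using jL m2 unfolding uu_def vv_def by auto
    have cardL2: "card (PV (L2f L j)) = card (PV L) - 1"
      using PV_L2[OF jL m2] vvL finite_PV unfolding vv_def by simp
    have ned1: "ned (L1f L j) = ned L - 1" unfolding ned_def D(3) len_L1 by simp
    have ned2: "ned (L2f L j) = ned L - 1" unfolding ned_def cardL2 len_L2 by simp
    have nedpos: "1 \<le> ned L" unfolding ned_def using c by simp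
    have tot1: "total (L1f L j) = total L" unfolding total_PV D(2) ..
    have tot2: "total (L2f L j) = total L" unfolding total_def psums_L2[OF jL m2] ..
    have v1: "vld (L1f L j)" by (rule vld_L1[OF vL jL m2])
    have v2: "vld (L2f L j)" by (rule vld_L2[OF vL jL m2])
    obtain g1 where g1: "lin P {\<mu> \<in> partitions (total L). length L + 1 < length \<mu>} g1"
      "\<forall>\<alpha>. of_nat (wcsf (PV (L1f L j)) PEd (PW (L1f L j)) \<alpha>) = (-1) ^ (ned L - 1) * P (sd (psums (L1f L j))) \<alpha> + g1 \<alpha>"
      using less.hyps[of "L1f L j"] v1 nedpos unfolding ned1 tot1 len_L1 by auto
    obtain g2 where g2: "lin P ?S g2"
      "\<forall>\<alpha>. of_nat (wcsf (PV (L2f L j)) PEd (PW (L2f L j)) \<alpha>) = (-1) ^ (ned L - 1) * P (sd (psums L)) \<alpha> + g2 \<alpha>"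
      using less.hyps[of "L2f L j"] v2 nedpos unfolding ned2 tot2 len_L2 psums_L2[OF jL m2] by auto
    have mem1: "sd (psums (L1f L j)) \<in> ?S"
      using vld_sd[OF v1] unfolding tot1 by (simp add: psums_def len_L1)
    have h1: "lin P ?S (\<lambda>\<alpha>. of_nat (wcsf (PV (L1f L j)) PEd (PW (L1f L j)) \<alpha>))"
    proof -
      have "lin P ?S (\<lambda>\<alpha>. (-1) ^ (ned L - 1) * P (sd (psums (L1f L j))) \<alpha> + g1 \<alpha>)"
        by (rule lin_add[OF lin_smult[OF lin_basis[OF finS mem1]] lin_mono[OF _ finS g1(1)]]) auto
      then show ?thesis using g1(2) by simp
    qed
    have uv: "uu \<noteq> vv" unfolding uu_def vv_def using m2 by simp
    have Euv: "PEd uu vv" unfolding uu_def vv_def PEd_def using m2 by auto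
    have irr: "\<forall>x\<in>PV L. \<not> PEd x x" unfolding PEd_def by simp
    have dc: "(of_nat (wcsf (PV L) PEd (PW L) \<alpha>) :: rat) =
        of_nat (wcsf (PV (L1f L j)) PEd (PW (L1f L j)) \<alpha>) - of_nat (wcsf (PV (L2f L j)) PEd (PW (L2f L j)) \<alpha>)" for \<alpha>
      using wcsf_dc[OF finite_PV uuL vvL uv Euv irr vld_pos[OF vL], of \<alpha>] D(1)[of \<alpha>] C[of \<alpha>] by simp
    have sgn: "((-1::rat) ^ ned L) = - ((-1) ^ (ned L - 1))"
      using nedpos by (metis One_nat_def Suc_pred less_eq_Suc_le mult_minus1 power_Suc)
    show ?thesis
    proof (intro exI conjI)
      show "lin P ?S (\<lambda>\<alpha>. of_nat (wcsf (PV (L1f L j)) PEd (PW (L1f L j)) \<alpha>) - g2 \<alpha>)"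
        by (rule lin_diff[OF h1 g2(1)])
      show "\<forall>\<alpha>. of_nat (wcsf (PV L) PEd (PW L) \<alpha>) = (-1) ^ ned L * P (sd (psums L)) \<alpha> +
          (of_nat (wcsf (PV (L1f L j)) PEd (PW (L1f L j)) \<alpha>) - g2 \<alpha>)"
        using dc g2(2) sgn by (simp add: algebra_simps)
    qed
  qed
qed


definition Lp :: "nat list \<Rightarrow> nat list list" where "Lp lam = map (\<lambda>m. replicate m 1) lam"

definition X :: "nat list \<Rightarrow> (nat \<Rightarrow> nat) \<Rightarrow> rat" where
  "X lam \<alpha> = of_nat (csf_coeff (path_vertices lam) (path_edges lam) \<alpha>)"

lemma partitions_pos: "lam \<in> partitions n \<Longrightarrow> 0 \<notin> set lam"
  unfolding partitions_def by auto

lemma vld_Lp: "0 \<notin> set lam \<Longrightarrow> vld (Lp lam)"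
  unfolding vld_def Lp_def by (auto, metis gr0I)

lemma PV_Lp: "PV (Lp lam) = path_vertices lam"
  unfolding PV_def path_vertices_def Lp_def by auto

lemma PW_Lp: "x \<in> PV (Lp lam) \<Longrightarrow> PW (Lp lam) x = 1"
  unfolding PV_def PW_def Lp_def by auto

lemma psums_Lp: "psums (Lp lam) = lam"
  unfolding psums_def Lp_def by (simp add: comp_def sum_list_replicate)

lemma sd_id: "sorted_wrt (\<ge>) lam \<Longrightarrow> sd lam = lam"
proof -
  assume s: "sorted_wrt (\<ge>) lam"
  have "sorted (rev lam)" using s by (simp add: sorted_wrt_rev)
  then have "sort lam = rev lam" by (intro properties_for_sort) auto
  then show ?thesis unfolding sd_def by simp
qed

lemma total_Lp: "total (Lp lam) = sum_list lam"
  unfolding total_def psums_Lp ..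

lemma ned_Lp: "lam \<in> partitions n \<Longrightarrow> ned (Lp lam) = n - length lam"
proof -
  assume lam: "lam \<in> partitions n"
  have "card (PV (Lp lam)) = (\<Sum>j<length lam. lam ! j)" unfolding card_PV by (simp add: Lp_def)
  also have "\<dots> = sum_list lam" by (simp add: sum_list_sum_nth atLeast0LessThan)
  also have "\<dots> = n" using lam unfolding partitions_def by simp
  finally show ?thesis unfolding ned_def by (simp add: Lp_def)
qed

lemma X_wcsf: "X lam \<alpha> = of_nat (wcsf (PV (Lp lam)) PEd (PW (Lp lam)) \<alpha>)"
  unfolding X_def csf_coeff_wcsf PV_Lp path_edges_PEd
  by (rule arg_cong[where f=of_nat], rule wcsf_cong) (use PW_Lp[of _ lam] PV_Lp[of lam] in auto)

lemma X_expand: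
  assumes lam: "lam \<in> partitions n"
  shows "\<exists>g. lin P {\<mu> \<in> partitions n. length lam < length \<mu>} g \<and>
    (\<forall>\<alpha>. X lam \<alpha> = (-1) ^ (n - length lam) * P lam \<alpha> + g \<alpha>)"
proof -
  have v: "vld (Lp lam)" by (rule vld_Lp[OF partitions_pos[OF lam]])
  have t: "total (Lp lam) = n" using lam unfolding total_Lp partitions_def by simp
  have l: "length (Lp lam) = length lam" by (simp add: Lp_def)
  have s: "sd (psums (Lp lam)) = lam" using lam unfolding psums_Lp partitions_def by (simp add: sd_id)
  show ?thesis using thmC[OF v] unfolding t l s ned_Lp[OF lam] X_wcsf[symmetric] .
qed

lemma thmB:
  assumes "\<nu> \<in> partitions n"
  shows "lin X (partitions n) (P \<nu>)"
  using assms
proof (induction "n - length \<nu>" arbitrary: \<nu> rule: less_induct)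
  case less
  obtain g where g: "lin P {\<mu> \<in> partitions n. length \<nu> < length \<mu>} g"
    "\<forall>\<alpha>. X \<nu> \<alpha> = (-1) ^ (n - length \<nu>) * P \<nu> \<alpha> + g \<alpha>"
    using X_expand[OF less.prems] by blast
  have gX: "lin X (partitions n) g"
  proof (rule lin_trans[OF g(1)])
    show "finite {\<mu> \<in> partitions n. length \<nu> < length \<mu>}" using finite_partitions by simp
    show "\<forall>\<mu>\<in>{\<mu> \<in> partitions n. length \<nu> < length \<mu>}. lin X (partitions n) (P \<mu>)"
    proof
      fix \<mu> assume \<mu>: "\<mu> \<in> {\<mu> \<in> partitions n. length \<nu> < length \<mu>}"
      have "n - length \<mu> < n - length \<nu>" using \<mu> partitions_length[of \<mu> n] by auto
      then show "lin X (partitions n) (P \<mu>)" using less.hyps \<mu> by blast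
    qed
  qed
  have "lin X (partitions n) (\<lambda>\<alpha>. (-1) ^ (n - length \<nu>) * (X \<nu> \<alpha> - g \<alpha>))"
    by (rule lin_smult[OF lin_diff[OF lin_basis[OF finite_partitions less.prems] gX]])
  moreover have "(-1) ^ (n - length \<nu>) * (X \<nu> \<alpha> - g \<alpha>) = P \<nu> \<alpha>" for \<alpha>
  proof -
    have "(-1) ^ (n - length \<nu>) * (X \<nu> \<alpha> - g \<alpha>) = ((-1) ^ (n - length \<nu>) * (-1::rat) ^ (n - length \<nu>)) * P \<nu> \<alpha>"
      using g(2) by (simp add: algebra_simps)
    also have "(-1) ^ (n - length \<nu>) * (-1::rat) ^ (n - length \<nu>) = 1"
      by (simp add: power_mult_distrib[symmetric])
    finally show ?thesis by simp
  qed
  ultimately show ?case by simp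
qed


definition pad :: "nat list \<Rightarrow> nat \<Rightarrow> nat" where
  "pad \<mu> i = (if 1 \<le> i \<and> i \<le> length \<mu> then \<mu> ! (i - 1) else 0)"

lemma partitions_nth_pos: "\<mu> \<in> partitions n \<Longrightarrow> j < length \<mu> \<Longrightarrow> 0 < \<mu> ! j"
  using partitions_pos by (metis gr0I nth_mem)

lemma pp_fin: "\<mu> \<in> partitions n \<Longrightarrow> finite {c. c \<in> {..<length \<mu>} \<rightarrow>\<^sub>E {1..} \<and> proper_colouring {..<length \<mu>} (\<lambda>_ _. False) c \<and>
       (\<forall>i. (\<Sum>j\<in>{j\<in>{..<length \<mu>}. c j = i}. \<mu> ! j) = \<alpha> i)}"
  by (rule fin_col) (auto intro: partitions_nth_pos)

lemma pp_pad_self: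
  assumes \<mu>: "\<mu> \<in> partitions n"
  shows "pp \<mu> (pad \<mu>) \<noteq> 0"
proof -
  let ?l = "length \<mu>"
  define c0 where "c0 = restrict (\<lambda>j. j + 1) {..<?l}"
  have sets: "{j\<in>{..<?l}. c0 j = i} = (if 1 \<le> i \<and> i \<le> ?l then {i - 1} else {})" for i
    unfolding c0_def by auto
  have s: "(\<Sum>j\<in>{j\<in>{..<?l}. c0 j = i}. \<mu> ! j) = pad \<mu> i" for i
    unfolding sets pad_def by simp
  have "c0 \<in> {..<?l} \<rightarrow>\<^sub>E {1..}" unfolding c0_def by auto
  then have "c0 \<in> {c. c \<in> {..<?l} \<rightarrow>\<^sub>E {1..} \<and> proper_colouring {..<?l} (\<lambda>_ _. False) c \<and>
       (\<forall>i. (\<Sum>j\<in>{j\<in>{..<?l}. c j = i}. \<mu> ! j) = pad \<mu> i)}"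
    using s by (simp add: proper_colouring_def)
  then have "{c. c \<in> {..<?l} \<rightarrow>\<^sub>E {1..} \<and> proper_colouring {..<?l} (\<lambda>_ _. False) c \<and>
       (\<forall>i. (\<Sum>j\<in>{j\<in>{..<?l}. c j = i}. \<mu> ! j) = pad \<mu> i)} \<noteq> {}" by blast
  then have "card {c. c \<in> {..<?l} \<rightarrow>\<^sub>E {1..} \<and> proper_colouring {..<?l} (\<lambda>_ _. False) c \<and>
       (\<forall>i. (\<Sum>j\<in>{j\<in>{..<?l}. c j = i}. \<mu> ! j) = pad \<mu> i)} \<noteq> 0"
    using pp_fin[OF \<mu>, of "pad \<mu>"] by simp
  then show ?thesis unfolding pp_def wcsf_def .
qed

lemma sorted_desc_eq:
  assumes "sorted_wrt (\<ge>) xs" "sorted_wrt (\<ge>) ys" "mset xs = mset (ys :: nat list)"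
  shows "xs = ys"
proof -
  have "sort ys = rev xs" using assms by (intro properties_for_sort) (auto simp: sorted_wrt_rev)
  moreover have "sort ys = rev ys" using assms by (intro properties_for_sort) (auto simp: sorted_wrt_rev)
  ultimately show ?thesis by simp
qed

lemma pp_pad_nz:
  assumes \<mu>: "\<mu> \<in> partitions n" and \<mu>0: "\<mu>0 \<in> partitions n" and nz: "pp \<mu> (pad \<mu>0) \<noteq> 0"
  shows "length \<mu>0 \<le> length \<mu> \<and> (length \<mu> = length \<mu>0 \<longrightarrow> \<mu> = \<mu>0)"
proof -
  let ?l = "length \<mu>" and ?lz = "length \<mu>0"
  obtain c where c: "c \<in> {..<?l} \<rightarrow>\<^sub>E {1..}"
    and sums: "\<And>i. (\<Sum>j\<in>{j\<in>{..<?l}. c j = i}. \<mu> ! j) = pad \<mu>0 i"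
  proof -
    have "{c. c \<in> {..<?l} \<rightarrow>\<^sub>E {1..} \<and> proper_colouring {..<?l} (\<lambda>_ _. False) c \<and>
       (\<forall>i. (\<Sum>j\<in>{j\<in>{..<?l}. c j = i}. \<mu> ! j) = pad \<mu>0 i)} \<noteq> {}"
    proof
      assume e: "{c. c \<in> {..<?l} \<rightarrow>\<^sub>E {1..} \<and> proper_colouring {..<?l} (\<lambda>_ _. False) c \<and>
       (\<forall>i. (\<Sum>j\<in>{j\<in>{..<?l}. c j = i}. \<mu> ! j) = pad \<mu>0 i)} = {}"
      have "pp \<mu> (pad \<mu>0) = 0" unfolding pp_def wcsf_def e by simp
      then show False using nz by simp
    qed
    then show ?thesis using that by blast
  qed
  have hit: "\<exists>j<?l. c j = i" if i: "i \<in> {1..?lz}" for i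
  proof (rule ccontr)
    assume "\<not> (\<exists>j<?l. c j = i)"
    then have "{j\<in>{..<?l}. c j = i} = {}" by auto
    then have "pad \<mu>0 i = 0" using sums[of i] by (metis sum.empty)
    moreover have "0 < pad \<mu>0 i" using i partitions_nth_pos[OF \<mu>0, of "i - 1"] unfolding pad_def by auto
    ultimately show False by simp
  qed
  have sub: "{1..?lz} \<subseteq> c ` {..<?l}" using hit by blast
  have "?lz \<le> card (c ` {..<?l})" using card_mono[OF _ sub] by simp
  also have cle: "\<dots> \<le> ?l" using card_image_le[of "{..<?l}" c] by simp
  finally have le: "?lz \<le> ?l" .
  moreover have "?l = ?lz \<longrightarrow> \<mu> = \<mu>0"
  proof
    assume eq: "?l = ?lz"
    have cardim: "card (c ` {..<?l}) = ?l" using card_mono[OF _ sub] cle eq by simp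
    have inj: "inj_on c {..<?l}" using cardim by (simp add: eq_card_imp_inj_on)
    have img: "c ` {..<?l} = {1..?l}"
      using card_subset_eq[OF _ sub] cardim eq by simp
    define \<pi> where "\<pi> j = (if j < ?l then c j - 1 else j)" for j
    have cpos: "\<And>j. j < ?l \<Longrightarrow> 1 \<le> c j" using c by auto
    have injp: "inj_on \<pi> {..<?l}"
    proof (rule inj_onI)
      fix x y assume x: "x \<in> {..<?l}" and y: "y \<in> {..<?l}" and e: "\<pi> x = \<pi> y"
      then have "c x - 1 = c y - 1" unfolding \<pi>_def by simp
      moreover have "1 \<le> c x" "1 \<le> c y" using cpos x y by auto
      ultimately have "c x = c y" by simp
      then show "x = y" using inj x y unfolding inj_on_def by blast
    qed
    have subp: "\<pi> ` {..<?l} \<subseteq> {..<?l}"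
    proof
      fix y assume "y \<in> \<pi> ` {..<?l}"
      then obtain j where j: "j < ?l" "y = c j - 1" unfolding \<pi>_def by auto
      have "c j \<in> {1..?l}" using img j(1) by blast
      then show "y \<in> {..<?l}" using j by auto
    qed
    have imgp: "\<pi> ` {..<?l} = {..<?l}"
      using card_subset_eq[OF _ subp] card_image[OF injp] by simp
    have perm: "\<pi> permutes {..<?l}"
    proof (rule bij_imp_permutes)
      show "bij_betw \<pi> {..<?l} {..<?l}" unfolding bij_betw_def using injp imgp by blast
      show "\<And>x. x \<notin> {..<?l} \<Longrightarrow> \<pi> x = x" unfolding \<pi>_def by simp
    qed
    have nth: "\<mu> ! j = \<mu>0 ! \<pi> j" if j: "j < ?l" for j
    proof -
      have "{j'\<in>{..<?l}. c j' = c j} = {j}" using inj j unfolding inj_on_def by auto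
      then have "\<mu> ! j = pad \<mu>0 (c j)" using sums[of "c j"] by simp
      moreover have "c j \<in> {1..?l}" using img j by blast
      ultimately show ?thesis unfolding pad_def \<pi>_def using j eq by auto
    qed
    have "\<mu> = permute_list \<pi> \<mu>0"
      by (rule nth_equalityI) (use eq nth in \<open>auto simp: permute_list_def\<close>)
    then have "mset \<mu> = mset \<mu>0" using perm eq by (simp add: mset_permute_list)
    then show "\<mu> = \<mu>0" using \<mu> \<mu>0 sorted_desc_eq unfolding partitions_def by blast
  qed
  ultimately show ?thesis by simp
qed

lemma U1:
  assumes "\<forall>\<alpha>. (\<Sum>\<mu>\<in>partitions n. e \<mu> * P \<mu> \<alpha>) = 0"
  shows "\<forall>\<mu>\<in>partitions n. e \<mu> = 0"
proof (rule ccontr)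
  assume "\<not> (\<forall>\<mu>\<in>partitions n. e \<mu> = 0)"
  then have Zne: "{\<mu>\<in>partitions n. e \<mu> \<noteq> 0} \<noteq> {}" by auto
  let ?Z = "{\<mu>\<in>partitions n. e \<mu> \<noteq> 0}"
  have finZ: "finite ?Z" using finite_partitions by simp
  define M where "M = Max (length ` ?Z)"
  have "M \<in> length ` ?Z" using Max_in[of "length ` ?Z"] finZ Zne unfolding M_def by auto
  then obtain \<mu>0 where \<mu>0: "\<mu>0 \<in> ?Z" "length \<mu>0 = M" by auto
  have maxl: "\<And>\<mu>. \<mu> \<in> ?Z \<Longrightarrow> length \<mu> \<le> M" unfolding M_def using finZ by auto
  have \<mu>0P: "\<mu>0 \<in> partitions n" using \<mu>0 by auto
  have zero: "e \<mu> * P \<mu> (pad \<mu>0) = 0" if "\<mu> \<in> partitions n - {\<mu>0}" for \<mu>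
  proof (rule ccontr)
    assume h: "e \<mu> * P \<mu> (pad \<mu>0) \<noteq> 0"
    then have "\<mu> \<in> ?Z" using that by auto
    then have "length \<mu> \<le> length \<mu>0" using maxl \<mu>0 by auto
    moreover have "pp \<mu> (pad \<mu>0) \<noteq> 0" using h by auto
    then have "length \<mu>0 \<le> length \<mu> \<and> (length \<mu> = length \<mu>0 \<longrightarrow> \<mu> = \<mu>0)"
      using pp_pad_nz[of \<mu> n \<mu>0] that \<mu>0P by auto
    ultimately show False using that by auto
  qed
  have "0 = (\<Sum>\<mu>\<in>partitions n. e \<mu> * P \<mu> (pad \<mu>0))" using assms by simp
  also have "\<dots> = e \<mu>0 * P \<mu>0 (pad \<mu>0) + (\<Sum>\<mu>\<in>partitions n - {\<mu>0}. e \<mu> * P \<mu> (pad \<mu>0))"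
    using sum.remove[OF finite_partitions \<mu>0P] by simp
  also have "\<dots> = e \<mu>0 * P \<mu>0 (pad \<mu>0)"
  proof -
    have "(\<Sum>\<mu>\<in>partitions n - {\<mu>0}. e \<mu> * P \<mu> (pad \<mu>0)) = 0"
      by (rule sum.neutral) (use zero in blast)
    then show ?thesis by simp
  qed
  finally have "e \<mu>0 * P \<mu>0 (pad \<mu>0) = 0" by simp
  moreover have "pp \<mu>0 (pad \<mu>0) \<noteq> 0" by (rule pp_pad_self[OF \<mu>0P])
  ultimately show False using \<mu>0 by simp
qed


lemma lin_zero_out:
  assumes "lin B S f" "S \<subseteq> T" "finite T"
  shows "\<exists>c. (\<forall>\<mu>. \<mu> \<notin> S \<longrightarrow> c \<mu> = 0) \<and> (\<forall>\<alpha>. f \<alpha> = (\<Sum>\<mu>\<in>T. c \<mu> * B \<mu> \<alpha>))"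
proof -
  obtain c where c: "\<forall>\<alpha>. f \<alpha> = (\<Sum>\<mu>\<in>S. c \<mu> * B \<mu> \<alpha>)" using assms(1) unfolding lin_def by blast
  show ?thesis
  proof (rule exI[of _ "\<lambda>\<mu>. if \<mu> \<in> S then c \<mu> else 0"], intro conjI allI impI)
    fix \<alpha>
    have "(\<Sum>\<mu>\<in>T. (if \<mu> \<in> S then c \<mu> else 0) * B \<mu> \<alpha>) = (\<Sum>\<mu>\<in>T. if \<mu> \<in> S then c \<mu> * B \<mu> \<alpha> else 0)"
      by (rule sum.cong) auto
    also have "\<dots> = (\<Sum>\<mu>\<in>S. c \<mu> * B \<mu> \<alpha>)"
      using assms(2,3) by (simp add: sum.If_cases Int_absorb1)
    finally show "f \<alpha> = (\<Sum>\<mu>\<in>T. (if \<mu> \<in> S then c \<mu> else 0) * B \<mu> \<alpha>)" using c by simp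
  qed simp
qed

lemma X_tri:
  assumes lam: "lam \<in> partitions n"
  shows "\<exists>T. (\<forall>\<alpha>. X lam \<alpha> = (\<Sum>\<mu>\<in>partitions n. T \<mu> * P \<mu> \<alpha>)) \<and> T lam \<noteq> 0 \<and>
     (\<forall>\<mu>. T \<mu> \<noteq> 0 \<longrightarrow> \<mu> = lam \<or> length lam < length \<mu>)"
proof -
  obtain g where g: "lin P {\<mu> \<in> partitions n. length lam < length \<mu>} g"
    "\<forall>\<alpha>. X lam \<alpha> = (-1) ^ (n - length lam) * P lam \<alpha> + g \<alpha>"
    using X_expand[OF lam] by blast
  obtain c where c: "\<forall>\<mu>. \<mu> \<notin> {\<mu> \<in> partitions n. length lam < length \<mu>} \<longrightarrow> c \<mu> = 0"
    "\<forall>\<alpha>. g \<alpha> = (\<Sum>\<mu>\<in>partitions n. c \<mu> * P \<mu> \<alpha>)"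
    using lin_zero_out[OF g(1) _ finite_partitions] by blast
  define \<sigma> :: rat where "\<sigma> = (-1) ^ (n - length lam)"
  define T where "T \<mu> = (if \<mu> = lam then \<sigma> else 0) + c \<mu>" for \<mu>
  have clam: "c lam = 0" using c(1) by auto
  show ?thesis
  proof (intro exI conjI allI impI)
    fix \<alpha>
    have "(\<Sum>\<mu>\<in>partitions n. T \<mu> * P \<mu> \<alpha>) = (\<Sum>\<mu>\<in>partitions n. (if \<mu> = lam then \<sigma> * P \<mu> \<alpha> else 0)) + (\<Sum>\<mu>\<in>partitions n. c \<mu> * P \<mu> \<alpha>)"
    proof -
      have "(\<Sum>\<mu>\<in>partitions n. T \<mu> * P \<mu> \<alpha>) = (\<Sum>\<mu>\<in>partitions n. (if \<mu> = lam then \<sigma> * P \<mu> \<alpha> else 0) + c \<mu> * P \<mu> \<alpha>)"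
        by (rule sum.cong) (auto simp: T_def distrib_right)
      then show ?thesis by (simp add: sum.distrib)
    qed
    also have "\<dots> = \<sigma> * P lam \<alpha> + g \<alpha>" using lam c(2) finite_partitions by (simp add: sum.delta)
    finally show "X lam \<alpha> = (\<Sum>\<mu>\<in>partitions n. T \<mu> * P \<mu> \<alpha>)" using g(2) unfolding \<sigma>_def by simp
  next
    show "T lam \<noteq> 0" unfolding T_def \<sigma>_def using clam by simp
  next
    fix \<mu> assume "T \<mu> \<noteq> 0"
    then show "\<mu> = lam \<or> length lam < length \<mu>" unfolding T_def using c(1) by (cases "\<mu> = lam") auto
  qed
qed

lemma X_indep:
  assumes h: "\<forall>\<alpha>. (\<Sum>lam\<in>partitions n. d lam * X lam \<alpha>) = 0"
  shows "\<forall>lam\<in>partitions n. d lam = 0"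
proof (rule ccontr)
  assume nz: "\<not> (\<forall>lam\<in>partitions n. d lam = 0)"
  have "\<forall>lam\<in>partitions n. \<exists>T. (\<forall>\<alpha>. X lam \<alpha> = (\<Sum>\<mu>\<in>partitions n. T \<mu> * P \<mu> \<alpha>)) \<and> T lam \<noteq> 0 \<and>
     (\<forall>\<mu>. T \<mu> \<noteq> 0 \<longrightarrow> \<mu> = lam \<or> length lam < length \<mu>)" using X_tri by blast
  then obtain TT where TT: "\<And>lam. lam \<in> partitions n \<Longrightarrow> (\<forall>\<alpha>. X lam \<alpha> = (\<Sum>\<mu>\<in>partitions n. TT lam \<mu> * P \<mu> \<alpha>)) \<and> TT lam lam \<noteq> 0 \<and>
     (\<forall>\<mu>. TT lam \<mu> \<noteq> 0 \<longrightarrow> \<mu> = lam \<or> length lam < length \<mu>)"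
    by metis
  define e where "e \<mu> = (\<Sum>lam\<in>partitions n. d lam * TT lam \<mu>)" for \<mu>
  have "\<forall>\<alpha>. (\<Sum>\<mu>\<in>partitions n. e \<mu> * P \<mu> \<alpha>) = 0"
  proof
    fix \<alpha>
    have "(\<Sum>\<mu>\<in>partitions n. e \<mu> * P \<mu> \<alpha>) = (\<Sum>\<mu>\<in>partitions n. \<Sum>lam\<in>partitions n. d lam * TT lam \<mu> * P \<mu> \<alpha>)"
      unfolding e_def by (simp add: sum_distrib_right)
    also have "\<dots> = (\<Sum>lam\<in>partitions n. \<Sum>\<mu>\<in>partitions n. d lam * TT lam \<mu> * P \<mu> \<alpha>)"
      by (rule sum.swap)
    also have "\<dots> = (\<Sum>lam\<in>partitions n. d lam * X lam \<alpha>)"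
    proof (rule sum.cong[OF refl])
      fix lam assume "lam \<in> partitions n"
      then have "X lam \<alpha> = (\<Sum>\<mu>\<in>partitions n. TT lam \<mu> * P \<mu> \<alpha>)" using TT by blast
      then show "(\<Sum>\<mu>\<in>partitions n. d lam * TT lam \<mu> * P \<mu> \<alpha>) = d lam * X lam \<alpha>"
        by (simp add: sum_distrib_left mult.assoc)
    qed
    also have "\<dots> = 0" using h by simp
    finally show "(\<Sum>\<mu>\<in>partitions n. e \<mu> * P \<mu> \<alpha>) = 0" .
  qed
  then have e0: "\<forall>\<mu>\<in>partitions n. e \<mu> = 0" by (rule U1)
  let ?Z = "{lam\<in>partitions n. d lam \<noteq> 0}"
  have finZ: "finite ?Z" using finite_partitions by simp
  have Zne: "?Z \<noteq> {}" using nz by auto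
  define M where "M = Min (length ` ?Z)"
  have "M \<in> length ` ?Z" using Min_in[of "length ` ?Z"] finZ Zne unfolding M_def by auto
  then obtain l0 where l0: "l0 \<in> ?Z" "length l0 = M" by auto
  have minl: "\<And>lam. lam \<in> ?Z \<Longrightarrow> M \<le> length lam" unfolding M_def using finZ by auto
  have l0P: "l0 \<in> partitions n" using l0 by auto
  have zero: "d lam * TT lam l0 = 0" if "lam \<in> partitions n - {l0}" for lam
  proof (rule ccontr)
    assume hh: "d lam * TT lam l0 \<noteq> 0"
    then have "lam \<in> ?Z" using that by auto
    then have "length l0 \<le> length lam" using minl l0 by auto
    moreover have "TT lam l0 \<noteq> 0" using hh by auto
    then have "l0 = lam \<or> length lam < length l0" using TT that by blast
    ultimately show False using that by auto
  qed
  have "0 = e l0" using e0 l0P by simp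
  also have "\<dots> = d l0 * TT l0 l0 + (\<Sum>lam\<in>partitions n - {l0}. d lam * TT lam l0)"
    unfolding e_def using sum.remove[OF finite_partitions l0P] by simp
  also have "\<dots> = d l0 * TT l0 l0"
  proof -
    have "(\<Sum>lam\<in>partitions n - {l0}. d lam * TT lam l0) = 0"
      by (rule sum.neutral) (use zero in blast)
    then show ?thesis by simp
  qed
  finally have "d l0 * TT l0 l0 = 0" by simp
  moreover have "TT l0 l0 \<noteq> 0" using TT l0P by blast
  ultimately show False using l0 by simp
qed


lemma simple_irr: "simple_graph V E \<Longrightarrow> \<forall>x\<in>V. \<not> E x x"
  unfolding simple_graph_def by auto

lemma csf_lin:
  assumes "simple_graph V E"
  shows "lin X (partitions (card V)) (\<lambda>\<alpha>. of_nat (csf_coeff V E \<alpha>))"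
proof -
  have fin: "finite V" using assms unfolding simple_graph_def by auto
  have "lin P (partitions (sum (\<lambda>_. 1) V)) (\<lambda>\<alpha>. of_nat (wcsf V E (\<lambda>_. 1) \<alpha>))"
    by (rule thmA[where w="\<lambda>_. 1" and V=V and E=E, OF fin simple_irr[OF assms]]) simp
  then have "lin P (partitions (card V)) (\<lambda>\<alpha>. of_nat (csf_coeff V E \<alpha>))"
    unfolding csf_coeff_wcsf by simp
  then show ?thesis by (rule lin_trans) (auto intro: thmB simp: finite_partitions)
qed

lemma tree_coeffs_prop:
  assumes "simple_graph V E"
  shows "(\<forall>lam. lam \<notin> partitions (card V) \<longrightarrow> tree_coeffs V E lam = 0) \<and>
      (\<forall>\<alpha>. of_nat (csf_coeff V E \<alpha>) = (\<Sum>lam\<in>partitions (card V). tree_coeffs V E lam * X lam \<alpha>))"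
proof -
  let ?Pn = "partitions (card V)"
  let ?Q = "\<lambda>a. (\<forall>lam. lam \<notin> ?Pn \<longrightarrow> a lam = 0) \<and>
      (\<forall>\<alpha>. of_nat (csf_coeff V E \<alpha>) = (\<Sum>lam\<in>?Pn. a lam * of_nat (csf_coeff (path_vertices lam) (path_edges lam) \<alpha>)))"
  obtain c where c: "\<forall>\<alpha>. of_nat (csf_coeff V E \<alpha>) = (\<Sum>lam\<in>?Pn. c lam * X lam \<alpha>)"
    using csf_lin[OF assms] unfolding lin_def by blast
  define a0 where "a0 lam = (if lam \<in> ?Pn then c lam else 0)" for lam
  have Qa0: "?Q a0"
  proof (intro conjI allI impI)
    fix lam assume "lam \<notin> ?Pn" then show "a0 lam = 0" unfolding a0_def by simp
  next
    fix \<alpha>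
    have "(\<Sum>lam\<in>?Pn. a0 lam * of_nat (csf_coeff (path_vertices lam) (path_edges lam) \<alpha>)) = (\<Sum>lam\<in>?Pn. c lam * X lam \<alpha>)"
      by (rule sum.cong) (auto simp: a0_def X_def)
    then show "of_nat (csf_coeff V E \<alpha>) = (\<Sum>lam\<in>?Pn. a0 lam * of_nat (csf_coeff (path_vertices lam) (path_edges lam) \<alpha>))"
      using c by simp
  qed
  have uniq: "a = a0" if Qa: "?Q a" for a
  proof
    fix lam
    have "\<forall>\<alpha>. (\<Sum>lam\<in>?Pn. (a lam - a0 lam) * X lam \<alpha>) = 0"
    proof
      fix \<alpha>
      have "(\<Sum>lam\<in>?Pn. (a lam - a0 lam) * X lam \<alpha>) = (\<Sum>lam\<in>?Pn. a lam * X lam \<alpha>) - (\<Sum>lam\<in>?Pn. a0 lam * X lam \<alpha>)"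
        by (simp add: left_diff_distrib sum_subtractf)
      also have "\<dots> = 0" using Qa Qa0 unfolding X_def by simp
      finally show "(\<Sum>lam\<in>?Pn. (a lam - a0 lam) * X lam \<alpha>) = 0" .
    qed
    then have "\<forall>lam\<in>?Pn. a lam - a0 lam = 0" by (rule X_indep)
    then show "a lam = a0 lam" using Qa Qa0 by (cases "lam \<in> ?Pn") auto
  qed
  have "tree_coeffs V E = a0"
    unfolding tree_coeffs_def by (rule the_equality[where P="?Q", OF Qa0 uniq])
  then show ?thesis using Qa0 unfolding X_def by simp
qed


definition Ms :: "nat \<Rightarrow> nat \<Rightarrow> (nat \<Rightarrow> nat) set" where
  "Ms q N = {\<alpha>. (\<forall>i. \<alpha> i \<le> N) \<and> (\<forall>i. i \<notin> {1..q} \<longrightarrow> \<alpha> i = 0)}"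

definition cnt :: "'v set \<Rightarrow> ('v \<Rightarrow> 'v \<Rightarrow> bool) \<Rightarrow> nat \<Rightarrow> nat" where
  "cnt V E q = card {\<kappa>. \<kappa> \<in> V \<rightarrow>\<^sub>E {1..q} \<and> proper_colouring V E \<kappa>}"

lemma finite_Ms: "finite (Ms q N)"
proof (rule finite_imageD)
  show "inj_on (\<lambda>\<alpha>. restrict \<alpha> {0..q}) (Ms q N)"
  proof (rule inj_onI)
    fix \<alpha> \<beta> assume a: "\<alpha> \<in> Ms q N" and b: "\<beta> \<in> Ms q N" and e: "restrict \<alpha> {0..q} = restrict \<beta> {0..q}"
    show "\<alpha> = \<beta>"
    proof
      fix i show "\<alpha> i = \<beta> i"
      proof (cases "i \<le> q")
        case True then show ?thesis using fun_cong[OF e, of i] by simp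
      next
        case False then show ?thesis using a b unfolding Ms_def by auto
      qed
    qed
  qed
  show "finite ((\<lambda>\<alpha>. restrict \<alpha> {0..q}) ` Ms q N)"
  proof (rule finite_subset)
    show "(\<lambda>\<alpha>. restrict \<alpha> {0..q}) ` Ms q N \<subseteq> {0..q} \<rightarrow>\<^sub>E {..N}" unfolding Ms_def by auto
    show "finite ({0..q} \<rightarrow>\<^sub>E {..N})" by (rule finite_PiE) auto
  qed
qed

lemma K1:
  assumes fin: "finite V" and pos: "\<forall>x\<in>V. 0 < w x"
  shows "cnt V E q = (\<Sum>\<alpha>\<in>Ms q (sum w V). wcsf V E w \<alpha>)"
proof -
  let ?A = "{\<kappa>. \<kappa> \<in> V \<rightarrow>\<^sub>E {1..q} \<and> proper_colouring V E \<kappa>}"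
  define f where "f \<kappa> = (\<lambda>i. \<Sum>v\<in>{v\<in>V. \<kappa> v = i}. w v)" for \<kappa> :: "'a \<Rightarrow> nat"
  have finA: "finite ?A" by (rule finite_subset[of _ "V \<rightarrow>\<^sub>E {1..q}"]) (use fin in \<open>auto intro: finite_PiE\<close>)
  have fM: "f \<kappa> \<in> Ms q (sum w V)" if k: "\<kappa> \<in> ?A" for \<kappa>
  proof -
    have "f \<kappa> i \<le> sum w V" for i unfolding f_def by (rule sum_mono2) (use fin in auto)
    moreover have "f \<kappa> i = 0" if "i \<notin> {1..q}" for i
    proof -
      have "{v\<in>V. \<kappa> v = i} = {}" using k that by auto
      then show ?thesis unfolding f_def by (metis sum.empty)
    qed
    ultimately show ?thesis unfolding Ms_def by auto
  qed
  have fib: "{\<kappa>\<in>?A. f \<kappa> = \<alpha>} = {\<kappa>. \<kappa> \<in> V \<rightarrow>\<^sub>E {1..} \<and> proper_colouring V E \<kappa> \<and>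
       (\<forall>i. (\<Sum>v\<in>{v\<in>V. \<kappa> v = i}. w v) = \<alpha> i)}" if aM: "\<alpha> \<in> Ms q (sum w V)" for \<alpha>
  proof (rule set_eqI, rule iffI)
    fix \<kappa> assume "\<kappa> \<in> {\<kappa>\<in>?A. f \<kappa> = \<alpha>}"
    then show "\<kappa> \<in> {\<kappa>. \<kappa> \<in> V \<rightarrow>\<^sub>E {1..} \<and> proper_colouring V E \<kappa> \<and>
       (\<forall>i. (\<Sum>v\<in>{v\<in>V. \<kappa> v = i}. w v) = \<alpha> i)}" unfolding f_def by auto
  next
    fix \<kappa> assume k: "\<kappa> \<in> {\<kappa>. \<kappa> \<in> V \<rightarrow>\<^sub>E {1..} \<and> proper_colouring V E \<kappa> \<and>
       (\<forall>i. (\<Sum>v\<in>{v\<in>V. \<kappa> v = i}. w v) = \<alpha> i)}"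
    have "\<kappa> v \<in> {1..q}" if v: "v \<in> V" for v
    proof (rule ccontr)
      assume nq: "\<kappa> v \<notin> {1..q}"
      have "0 < w v" using pos v by auto
      also have "w v \<le> (\<Sum>x\<in>{x\<in>V. \<kappa> x = \<kappa> v}. w x)" by (rule member_le_sum) (use v fin in auto)
      also have "\<dots> = \<alpha> (\<kappa> v)" using k by auto
      also have "\<dots> = 0" using aM nq unfolding Ms_def by auto
      finally show False by simp
    qed
    then have "\<kappa> \<in> V \<rightarrow>\<^sub>E {1..q}" using k by auto
    then show "\<kappa> \<in> {\<kappa>\<in>?A. f \<kappa> = \<alpha>}" using k unfolding f_def by auto
  qed
  have "?A = (\<Union>\<alpha>\<in>Ms q (sum w V). {\<kappa>\<in>?A. f \<kappa> = \<alpha>})" using fM by auto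
  then have "card ?A = card (\<Union>\<alpha>\<in>Ms q (sum w V). {\<kappa>\<in>?A. f \<kappa> = \<alpha>})" by (rule arg_cong)
  also have "\<dots> = (\<Sum>\<alpha>\<in>Ms q (sum w V). card {\<kappa>\<in>?A. f \<kappa> = \<alpha>})"
  proof (rule card_UN_disjoint)
    show "finite (Ms q (sum w V))" by (rule finite_Ms)
    show "\<forall>\<alpha>\<in>Ms q (sum w V). finite {\<kappa>\<in>?A. f \<kappa> = \<alpha>}"
    proof
      fix \<alpha> show "finite {\<kappa>\<in>?A. f \<kappa> = \<alpha>}" by (rule finite_subset[OF _ finA]) blast
    qed
    show "\<forall>\<alpha>\<in>Ms q (sum w V). \<forall>\<beta>\<in>Ms q (sum w V). \<alpha> \<noteq> \<beta> \<longrightarrow> {\<kappa>\<in>?A. f \<kappa> = \<alpha>} \<inter> {\<kappa>\<in>?A. f \<kappa> = \<beta>} = {}"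
      by auto
  qed
  also have "\<dots> = (\<Sum>\<alpha>\<in>Ms q (sum w V). wcsf V E w \<alpha>)"
  proof (rule sum.cong[OF refl])
    fix \<alpha> assume "\<alpha> \<in> Ms q (sum w V)"
    then show "card {\<kappa>\<in>?A. f \<kappa> = \<alpha>} = wcsf V E w \<alpha>" unfolding wcsf_def by (subst fib) auto
  qed
  finally show ?thesis unfolding cnt_def .
qed


lemma cnt_K1_PV: "vld L \<Longrightarrow> cnt (PV L) PEd q = (\<Sum>\<alpha>\<in>Ms q (total L). wcsf (PV L) PEd (PW L) \<alpha>)"
  using K1[OF finite_PV vld_pos] total_PV by metis

lemma cnt_path:
  assumes "vld L"
  shows "(of_nat (cnt (PV L) PEd q) :: rat) = of_nat q ^ length L * (of_nat q - 1) ^ ned L"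
  using assms
proof (induction "ned L" arbitrary: L rule: less_induct)
  case less
  have vL: "vld L" by fact
  show ?case
  proof (cases "\<exists>j<length L. 2 \<le> length (L ! j)")
    case False
    have one: "\<forall>j<length L. length (L ! j) = 1"
    proof (intro allI impI)
      fix j assume j: "j < length L"
      then have "L ! j \<noteq> []" using vL unfolding vld_def by auto
      moreover have "\<not> 2 \<le> length (L ! j)" using False j by blast
      ultimately show "length (L ! j) = 1" by (cases "L ! j") (auto simp: Suc_le_eq)
    qed
    have cPV: "card (PV L) = length L" unfolding card_PV using one by simp
    then have n0: "ned L = 0" unfolding ned_def by simp
    have noe: "proper_colouring (PV L) PEd \<kappa>" for \<kappa>
      unfolding proper_colouring_def PEd_def PV_def using one by auto
    have "cnt (PV L) PEd q = card (PV L \<rightarrow>\<^sub>E {1..q})" unfolding cnt_def using noe by simp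
    also have "\<dots> = q ^ length L" by (simp add: card_PiE finite_PV cPV)
    finally show ?thesis using n0 by simp
  next
    case True
    then obtain j where jL: "j < length L" and m2: "2 \<le> length (L ! j)" by blast
    define uu where "uu = (j, length (L ! j) - 2)"
    define vv where "vv = (j, length (L ! j) - 1)"
    have c: "length L + 1 \<le> card (PV L)" by (rule card_PV_ge[OF vL jL m2])
    have D: "wcsf (PV L) (Edel PEd uu vv) (PW L) \<alpha> = wcsf (PV (L1f L j)) PEd (PW (L1f L j)) \<alpha>"
      "sum (PW L) (PV L) = sum (PW (L1f L j)) (PV (L1f L j))"
      "card (PV (L1f L j)) = card (PV L)" for \<alpha>
      using del_iso[OF jL m2] unfolding uu_def vv_def by auto
    have C: "wcsf (PV L - {vv}) (Econ PEd uu vv) ((PW L)(uu := PW L uu + PW L vv)) \<alpha> = wcsf (PV (L2f L j)) PEd (PW (L2f L j)) \<alpha>" for \<alpha>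
      using con_iso[OF jL m2] unfolding uu_def vv_def by auto
    have vvL: "vv \<in> PV L" and uuL: "uu \<in> PV L" using jL m2 unfolding uu_def vv_def by auto
    have cardL2: "card (PV (L2f L j)) = card (PV L) - 1"
      using PV_L2[OF jL m2] vvL finite_PV unfolding vv_def by simp
    have ned1: "ned (L1f L j) = ned L - 1" unfolding ned_def D(3) len_L1 by simp
    have ned2: "ned (L2f L j) = ned L - 1" unfolding ned_def cardL2 len_L2 by simp
    have nedpos: "1 \<le> ned L" unfolding ned_def using c by simp
    have tot1: "total (L1f L j) = total L" unfolding total_PV D(2) ..
    have tot2: "total (L2f L j) = total L" unfolding total_def psums_L2[OF jL m2] ..
    have v1: "vld (L1f L j)" by (rule vld_L1[OF vL jL m2])
    have v2: "vld (L2f L j)" by (rule vld_L2[OF vL jL m2])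
    have IH1: "(of_nat (cnt (PV (L1f L j)) PEd q) :: rat) = of_nat q ^ (length L + 1) * (of_nat q - 1) ^ (ned L - 1)"
      using less.hyps[of "L1f L j"] v1 nedpos unfolding ned1 len_L1 by simp
    have IH2: "(of_nat (cnt (PV (L2f L j)) PEd q) :: rat) = of_nat q ^ length L * (of_nat q - 1) ^ (ned L - 1)"
      using less.hyps[of "L2f L j"] v2 nedpos unfolding ned2 len_L2 by simp
    have uv: "uu \<noteq> vv" unfolding uu_def vv_def using m2 by simp
    have Euv: "PEd uu vv" unfolding uu_def vv_def PEd_def using m2 by auto
    have irr: "\<forall>x\<in>PV L. \<not> PEd x x" unfolding PEd_def by simp
    have dc: "(of_nat (wcsf (PV L) PEd (PW L) \<alpha>) :: rat) =
        of_nat (wcsf (PV (L1f L j)) PEd (PW (L1f L j)) \<alpha>) - of_nat (wcsf (PV (L2f L j)) PEd (PW (L2f L j)) \<alpha>)" for \<alpha>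
      using wcsf_dc[OF finite_PV uuL vvL uv Euv irr vld_pos[OF vL], of \<alpha>] D(1)[of \<alpha>] C[of \<alpha>] by simp
    have "(of_nat (cnt (PV L) PEd q) :: rat) = (\<Sum>\<alpha>\<in>Ms q (total L). of_nat (wcsf (PV L) PEd (PW L) \<alpha>))"
      unfolding cnt_K1_PV[OF vL] by (simp add: of_nat_sum)
    also have "\<dots> = (\<Sum>\<alpha>\<in>Ms q (total L). of_nat (wcsf (PV (L1f L j)) PEd (PW (L1f L j)) \<alpha>))
       - (\<Sum>\<alpha>\<in>Ms q (total L). of_nat (wcsf (PV (L2f L j)) PEd (PW (L2f L j)) \<alpha>))"
      unfolding dc by (simp add: sum_subtractf)
    also have "\<dots> = of_nat (cnt (PV (L1f L j)) PEd q) - of_nat (cnt (PV (L2f L j)) PEd q)"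
      unfolding cnt_K1_PV[OF v1] cnt_K1_PV[OF v2] tot1 tot2 by (simp add: of_nat_sum)
    also have "\<dots> = of_nat q ^ length L * (of_nat q - 1) ^ (ned L - 1) * (of_nat q - 1)"
      unfolding IH1 IH2 by (simp add: algebra_simps)
    also have "\<dots> = of_nat q ^ length L * (of_nat q - 1) ^ ned L"
      using nedpos by (cases "ned L") (simp_all add: mult.assoc)
    finally show ?thesis .
  qed
qed


lemma card_path_vertices: "lam \<in> partitions n \<Longrightarrow> card (path_vertices lam) = n"
proof -
  assume lam: "lam \<in> partitions n"
  have "card (PV (Lp lam)) = (\<Sum>j<length lam. lam ! j)" unfolding card_PV by (simp add: Lp_def)
  also have "\<dots> = sum_list lam" by (simp add: sum_list_sum_nth atLeast0LessThan)
  also have "\<dots> = n" using lam unfolding partitions_def by simp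
  finally show ?thesis unfolding PV_Lp .
qed

lemma cnt_X:
  assumes lam: "lam \<in> partitions n"
  shows "(\<Sum>\<alpha>\<in>Ms q n. X lam \<alpha>) = of_nat q ^ length lam * (of_nat q - 1) ^ (n - length lam)"
proof -
  have fin: "finite (path_vertices lam)" unfolding PV_Lp[symmetric] by (rule finite_PV)
  have "(\<Sum>\<alpha>\<in>Ms q n. X lam \<alpha>) = of_nat (\<Sum>\<alpha>\<in>Ms q (sum (\<lambda>_. 1) (path_vertices lam)). wcsf (path_vertices lam) (path_edges lam) (\<lambda>_. 1) \<alpha>)"
    unfolding X_def csf_coeff_wcsf using card_path_vertices[OF lam] by (simp add: of_nat_sum)
  also have "\<dots> = of_nat (cnt (path_vertices lam) (path_edges lam) q)"
    using K1[OF fin, of "\<lambda>_. 1" "path_edges lam" q] by simp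
  also have "\<dots> = of_nat (cnt (PV (Lp lam)) PEd q)" unfolding PV_Lp path_edges_PEd ..
  also have "\<dots> = of_nat q ^ length (Lp lam) * (of_nat q - 1) ^ ned (Lp lam)"
    by (rule cnt_path[OF vld_Lp[OF partitions_pos[OF lam]]])
  finally show ?thesis unfolding ned_Lp[OF lam] by (simp add: Lp_def)
qed

lemma cnt_G:
  assumes G: "simple_graph V E"
  shows "(of_nat (cnt V E q) :: rat) = (\<Sum>lam\<in>partitions (card V). tree_coeffs V E lam * (of_nat q ^ length lam * (of_nat q - 1) ^ (card V - length lam)))"
proof -
  have fin: "finite V" using G unfolding simple_graph_def by auto
  let ?Pn = "partitions (card V)"
  have "(of_nat (cnt V E q) :: rat) = (\<Sum>\<alpha>\<in>Ms q (card V). of_nat (csf_coeff V E \<alpha>))"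
    using K1[OF fin, of "\<lambda>_. 1" E q] unfolding csf_coeff_wcsf by (simp add: of_nat_sum)
  also have "\<dots> = (\<Sum>\<alpha>\<in>Ms q (card V). \<Sum>lam\<in>?Pn. tree_coeffs V E lam * X lam \<alpha>)"
    using tree_coeffs_prop[OF G] by simp
  also have "\<dots> = (\<Sum>lam\<in>?Pn. \<Sum>\<alpha>\<in>Ms q (card V). tree_coeffs V E lam * X lam \<alpha>)"
    by (rule sum.swap)
  also have "\<dots> = (\<Sum>lam\<in>?Pn. tree_coeffs V E lam * (of_nat q ^ length lam * (of_nat q - 1) ^ (card V - length lam)))"
    by (rule sum.cong[OF refl]) (simp add: sum_distrib_left[symmetric] cnt_X)
  finally show ?thesis .
qed

definition chi0 :: "'v set \<Rightarrow> ('v \<Rightarrow> 'v \<Rightarrow> bool) \<Rightarrow> rat poly" where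
  "chi0 V E = (\<Sum>lam\<in>partitions (card V). smult (tree_coeffs V E lam) ([:0, 1:] ^ length lam * [:-1, 1:] ^ (card V - length lam)))"

lemma poly_eq_nat:
  fixes p q :: "rat poly"
  assumes "\<forall>n::nat. poly p (of_nat n) = poly q (of_nat n)"
  shows "p = q"
proof (rule ccontr)
  assume "p \<noteq> q"
  then have "p - q \<noteq> 0" by simp
  then have "finite {x. poly (p - q) x = 0}" by (rule poly_roots_finite)
  moreover have "range (of_nat :: nat \<Rightarrow> rat) \<subseteq> {x. poly (p - q) x = 0}" using assms by auto
  moreover have "infinite (range (of_nat :: nat \<Rightarrow> rat))"
    by (rule range_inj_infinite) (simp add: inj_on_def)
  ultimately show False using finite_subset by blast
qed

lemma chrom_eq:
  assumes G: "simple_graph V E"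
  shows "chromatic_poly V E = chi0 V E"
proof -
  let ?Q = "\<lambda>p. \<forall>q::nat. poly p (of_nat q) = of_nat (card {\<kappa>. \<kappa> \<in> V \<rightarrow>\<^sub>E {1..q} \<and> proper_colouring V E \<kappa>})"
  have Q0: "?Q (chi0 V E)"
  proof
    fix q :: nat
    have "poly (chi0 V E) (of_nat q) = (\<Sum>lam\<in>partitions (card V). tree_coeffs V E lam * (of_nat q ^ length lam * (of_nat q - 1) ^ (card V - length lam)))"
      unfolding chi0_def by (simp add: poly_sum)
    also have "\<dots> = of_nat (cnt V E q)" using cnt_G[OF G] by simp
    finally show "poly (chi0 V E) (of_nat q) = of_nat (card {\<kappa>. \<kappa> \<in> V \<rightarrow>\<^sub>E {1..q} \<and> proper_colouring V E \<kappa>})"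
      unfolding cnt_def .
  qed
  have "p = chi0 V E" if "?Q p" for p
    by (rule poly_eq_nat) (use that Q0 in simp)
  then show ?thesis unfolding chromatic_poly_def by (rule the_equality[where P="?Q", OF Q0])
qed


abbreviation YY :: "rat poly" where "YY \<equiv> [:0, 1:]"
abbreviation ZZ :: "rat poly" where "ZZ \<equiv> [:-1, 1:]"

lemma Ypow: "YY ^ j = monom 1 j" by (simp add: monom_altdef)

lemma const_pow: "[:c:] ^ k = [:c ^ k::rat:]"
  by (induct k) auto

lemma Zpow: "ZZ ^ r = (\<Sum>j\<le>r. monom (of_nat (r choose j) * (-1) ^ (r - j)) j)"
proof -
  have "ZZ = YY + [:-1:]" by simp
  then have "ZZ ^ r = (\<Sum>j\<le>r. of_nat (r choose j) * YY ^ j * [:-1:] ^ (r - j))"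
    using binomial_ring[of YY "[:-1:]" r] by metis
  also have "\<dots> = (\<Sum>j\<le>r. monom (of_nat (r choose j) * (-1) ^ (r - j)) j)"
  proof (rule sum.cong[OF refl])
    fix j
    have "of_nat (r choose j) * YY ^ j * [:-1:] ^ (r - j) = [:of_nat (r choose j):] * monom 1 j * [:(-1) ^ (r - j):]"
      by (simp add: Ypow const_pow of_nat_poly)
    also have "\<dots> = monom (of_nat (r choose j) * (-1) ^ (r - j)) j"
      by (simp add: monom_0[symmetric] mult_monom)
    finally show "of_nat (r choose j) * YY ^ j * [:-1:] ^ (r - j) = monom (of_nat (r choose j) * (-1) ^ (r - j)) j" .
  qed
  finally show ?thesis .
qed

lemma coeffZ: "coeff (ZZ ^ r) j = of_nat (r choose j) * (-1) ^ (r - j)"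
proof -
  have "coeff (ZZ ^ r) j = (\<Sum>i\<le>r. if i = j then of_nat (r choose i) * (-1) ^ (r - i) else 0)"
    unfolding Zpow coeff_sum by (rule sum.cong) auto
  also have "\<dots> = (if j \<le> r then of_nat (r choose j) * (-1) ^ (r - j) else 0)"
    by (simp add: sum.delta')
  also have "\<dots> = of_nat (r choose j) * (-1) ^ (r - j)" by simp
  finally show ?thesis .
qed

lemma coeffYZ: "coeff (YY ^ m * ZZ ^ r) k = (if k < m then 0 else of_nat (r choose (k - m)) * (-1) ^ (r - (k - m)))"
  unfolding Ypow coeff_monom_mult coeffZ by simp


definition BB :: "nat \<Rightarrow> rat poly \<Rightarrow> rat poly" where
  "BB n p = (\<Sum>m\<le>n. smult (coeff p m) (YY ^ m * ZZ ^ (n - m)))"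

lemma neg1_pow_poly: "(-1 :: rat poly) ^ k = [:(-1) ^ k:]"
  by (induct k) auto

lemma B1:
  assumes "l \<le> n"
  shows "BB n (YY ^ l * ZZ ^ (n - l)) = YY ^ l"
proof -
  define r where "r = n - l"
  have n: "n = r + l" using assms unfolding r_def by simp
  define c where "c j = (of_nat (r choose j) * (-1) ^ (r - j) :: rat)" for j
  have "BB n (YY ^ l * ZZ ^ (n - l)) = (\<Sum>m\<le>n. smult (if m < l then 0 else c (m - l)) (YY ^ m * ZZ ^ (n - m)))"
    unfolding BB_def coeffYZ c_def r_def ..
  also have "\<dots> = (\<Sum>m\<in>{l..n}. smult (c (m - l)) (YY ^ m * ZZ ^ (n - m)))"
  proof -
    have "{..n} = {..<l} \<union> {l..n}" using assms by auto
    then have "(\<Sum>m\<le>n. smult (if m < l then 0 else c (m - l)) (YY ^ m * ZZ ^ (n - m))) =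
      (\<Sum>m\<in>{..<l}. smult (if m < l then 0 else c (m - l)) (YY ^ m * ZZ ^ (n - m))) +
      (\<Sum>m\<in>{l..n}. smult (if m < l then 0 else c (m - l)) (YY ^ m * ZZ ^ (n - m)))"
      by (simp add: sum.union_disjoint ivl_disj_int)
    also have "\<dots> = (\<Sum>m\<in>{l..n}. smult (c (m - l)) (YY ^ m * ZZ ^ (n - m)))"
      by simp
    finally show ?thesis .
  qed
  also have "\<dots> = (\<Sum>j\<in>{0..r}. smult (c j) (YY ^ (j + l) * ZZ ^ (r - j)))"
    unfolding n using sum.shift_bounds_cl_nat_ivl[of "\<lambda>m. smult (c (m - l)) (YY ^ m * ZZ ^ (r + l - m))" 0 l r]
    by simp
  also have "\<dots> = (\<Sum>j\<le>r. YY ^ l * (of_nat (r choose j) * YY ^ j * (- ZZ) ^ (r - j)))"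
  proof (rule sum.cong)
    show "{0..r} = {..r}" by auto
  next
    fix j
    have "YY ^ l * (of_nat (r choose j) * YY ^ j * (- ZZ) ^ (r - j)) =
       YY ^ l * ([:of_nat (r choose j):] * YY ^ j * ([:(-1) ^ (r - j):] * ZZ ^ (r - j)))"
      by (simp only: power_minus[of ZZ] neg1_pow_poly of_nat_poly)
    also have "\<dots> = smult (c j) (YY ^ (j + l) * ZZ ^ (r - j))"
      unfolding c_def by (simp add: power_add algebra_simps)
    finally show "smult (c j) (YY ^ (j + l) * ZZ ^ (r - j)) = YY ^ l * (of_nat (r choose j) * YY ^ j * (- ZZ) ^ (r - j))"
      by simp
  qed
  also have "\<dots> = YY ^ l * (\<Sum>j\<le>r. of_nat (r choose j) * YY ^ j * (- ZZ) ^ (r - j))"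
    by (simp only: sum_distrib_left)
  also have "\<dots> = YY ^ l * (YY + - ZZ) ^ r"
    by (simp only: binomial_ring[symmetric])
  also have "YY + - ZZ = 1" by simp
  finally show ?thesis by simp
qed


lemma smult_sum_right: "smult a (\<Sum>i\<in>S. f i) = (\<Sum>i\<in>S. smult a (f i))"
  by (induct S rule: infinite_finite_induct) (auto simp: smult_add_right)

lemma BB_lin:
  assumes "finite S"
  shows "BB n (\<Sum>i\<in>S. smult (a i) (p i)) = (\<Sum>i\<in>S. smult (a i) (BB n (p i)))"
proof -
  have "BB n (\<Sum>i\<in>S. smult (a i) (p i)) = (\<Sum>m\<le>n. \<Sum>i\<in>S. smult (a i * coeff (p i) m) (YY ^ m * ZZ ^ (n - m)))"
    unfolding BB_def coeff_sum coeff_smult smult_sum ..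
  also have "\<dots> = (\<Sum>i\<in>S. \<Sum>m\<le>n. smult (a i) (smult (coeff (p i) m) (YY ^ m * ZZ ^ (n - m))))"
    by (subst sum.swap) simp
  also have "\<dots> = (\<Sum>i\<in>S. smult (a i) (BB n (p i)))"
    unfolding BB_def smult_sum_right ..
  finally show ?thesis .
qed

lemma partitions_len_pos: "lam \<in> partitions n \<Longrightarrow> 1 \<le> n \<Longrightarrow> 1 \<le> length lam"
  unfolding partitions_def by (cases lam) auto

theorem main:
  fixes V :: "'a set" and E :: "'a \<Rightarrow> 'a \<Rightarrow> bool" and k :: nat
  assumes G: "simple_graph V E" and n1: "card V \<ge> 1" and k1: "k \<ge> 1"
  shows "coeff (tree_poly V E) k =
    (-1) ^ (card V + k) *
      (\<Sum>m = 1..k. of_nat ((card V - m) choose (k - m)) * coeff (chromatic_poly V E) m)"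
proof -
  define n where "n = card V"
  define a where "a = tree_coeffs V E"
  let ?Pn = "partitions n"
  define chi where "chi = chromatic_poly V E"
  have chi: "chi = (\<Sum>lam\<in>?Pn. smult (a lam) (YY ^ length lam * ZZ ^ (n - length lam)))"
    unfolding chi_def chrom_eq[OF G] chi0_def n_def a_def ..
  have tau: "tree_poly V E = (\<Sum>lam\<in>?Pn. smult (a lam) (YY ^ length lam))"
    unfolding tree_poly_def n_def a_def monom_altdef ..
  have lenle: "\<And>lam. lam \<in> ?Pn \<Longrightarrow> length lam \<le> n" by (rule partitions_length)
  have lenpos: "\<And>lam. lam \<in> ?Pn \<Longrightarrow> 1 \<le> length lam" using partitions_len_pos n1 unfolding n_def by blast
  have tauB: "tree_poly V E = BB n chi"
    unfolding chi BB_lin[OF finite_partitions] tau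
    by (rule sum.cong[OF refl]) (simp add: B1 lenle)
  have cchi: "coeff chi m = (\<Sum>lam\<in>?Pn. a lam * coeff (YY ^ length lam * ZZ ^ (n - length lam)) m)" for m
    unfolding chi coeff_sum coeff_smult ..
  have chi0: "coeff chi 0 = 0"
    unfolding cchi coeffYZ using lenpos by (intro sum.neutral) force
  have chibig: "coeff chi m = 0" if "n < m" for m
  proof -
    have "coeff (YY ^ length lam * ZZ ^ (n - length lam)) m = 0" if lam: "lam \<in> ?Pn" for lam
      using lenle[OF lam] \<open>n < m\<close> unfolding coeffYZ by (simp add: binomial_eq_0)
    then show ?thesis unfolding cchi by simp
  qed
  define f where "f m = coeff chi m * coeff (YY ^ m * ZZ ^ (n - m)) k" for m
  define g where "g m = (-1) ^ (n + k) * (of_nat ((n - m) choose (k - m)) * coeff chi m)" for m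
  have "coeff (tree_poly V E) k = (\<Sum>m\<le>n. f m)"
    unfolding tauB BB_def coeff_sum coeff_smult f_def ..
  also have "\<dots> = (\<Sum>m\<in>{1..min n k}. f m)"
  proof (rule sum.mono_neutral_right)
    show "finite {..n}" by simp
    show "{1..min n k} \<subseteq> {..n}" by auto
    show "\<forall>i\<in>{..n} - {1..min n k}. f i = 0"
    proof
      fix i assume i: "i \<in> {..n} - {1..min n k}"
      then have "i = 0 \<or> k < i" by auto
      then show "f i = 0" unfolding f_def using chi0 coeffYZ by auto
    qed
  qed
  also have "\<dots> = (\<Sum>m\<in>{1..min n k}. g m)"
  proof (rule sum.cong[OF refl])
    fix m assume m: "m \<in> {1..min n k}"
    show "f m = g m"
    proof (cases "k \<le> n")
      case True
      have e: "n - m - (k - m) = n - k" using m True by auto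
      have "(-1::rat) ^ (n + k) = (-1) ^ (n - k) * ((-1) ^ k) ^ 2"
        using True by (metis (no_types, lifting) le_add_diff_inverse2 power_add power_even_eq add.assoc mult_2 power_mult)
      moreover have "((-1::rat) ^ k) ^ 2 = 1"
        by (simp add: power2_eq_square power_mult_distrib[symmetric])
      ultimately have s: "(-1::rat) ^ (n + k) = (-1) ^ (n - k)" by simp
      show ?thesis unfolding f_def g_def coeffYZ using m e s by auto
    next
      case False
      then have "(n - m) choose (k - m) = 0" using m by (intro binomial_eq_0) auto
      then show ?thesis unfolding f_def g_def coeffYZ using m by auto
    qed
  qed
  also have "\<dots> = (\<Sum>m = 1..k. g m)"
  proof (rule sum.mono_neutral_left)
    show "finite {1..k}" by simp
    show "{1..min n k} \<subseteq> {1..k}" by auto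
    show "\<forall>i\<in>{1..k} - {1..min n k}. g i = 0"
    proof
      fix i assume "i \<in> {1..k} - {1..min n k}"
      then have "n < i" by auto
      then show "g i = 0" unfolding g_def using chibig by simp
    qed
  qed
  also have "\<dots> = (-1) ^ (n + k) * (\<Sum>m = 1..k. of_nat ((n - m) choose (k - m)) * coeff chi m)"
    unfolding g_def sum_distrib_left ..
  finally show ?thesis unfolding n_def chi_def .
qed


theorem theorem3p2:
  fixes V :: "'a set" and E :: "'a \<Rightarrow> 'a \<Rightarrow> bool" and k :: nat
  assumes "simple_graph V E" and "card V \<ge> 1" and "k \<ge> 1"
  shows "coeff (tree_poly V E) k =
    (-1) ^ (card V + k) *
      (\<Sum>m = 1..k. of_nat ((card V - m) choose (k - m)) * coeff (chromatic_poly V E) m)"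
  by (rule main[OF assms])

end
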